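(* A puzzle $p\colon G(J)\to D'(K)$ is realizable if and only if all of its subcubes are realizable.
   Context: Let $R\in\{\mathbb Z,\mathbb Z_2\}$; an $R$-basis of $R^n$ is a $\mathbb Z$-basis of $\mathbb Z^n$ ($R=\mathbb Z$) or a basis of $\mathbb Z_2^n$ ($R=\mathbb Z_2$). $K$ is an $(n-1)$-dimensional star-shaped simplicial sphere on $[m]$. An $R$-characteristic map over a complex with $(N-1)$-dimensional facets is a map from its vertices to $R^N$ sending each $(N-1)$-face to an $R$-basis; D-J equivalence is equality up to left multiplication by $GL_N(R)$. For a face $\sigma$, $\operatorname{proj}_\sigma\lambda$ is the characteristic map on $\operatorname{link}\sigma$ given by $w\mapsto[\lambda(w)]\in R^N/\langle\lambda(u):u\in\sigma\rangle$. For $J=(j_1,\dots,j_m)\in\mathbb Z_{>0}^m$, $K(J)$ is the complex on vertices $\{i_k:1\le i\le m,1\le k\le j_i\}$ whose minimal non-faces are $\bigcup_{i\in\tau}\{i_1,\dots,i_{j_i}\}$ for $\tau$ a minimal non-face of $K$; $\operatorname{wed}_vK=K(J)$ with $j_v=2$, other $j_i=1$. $I(J)=\{\boldsymbol\alpha:1\le\alpha_i\le j_i\}$; $\sigma(\boldsymbol\alpha)$ is the set of all vertices of $K(J)$ except $1_{\alpha_1},\dots,m_{\alpha_m}$, a face whose link is identified with $K$ via $i_{\alpha_i}\mapsto i$. The pre-diagram $D'(K)$: vertices are D-J classes of $R$-characteristic maps over $K$; an edge colored $v$ joins $\lambda_1,\lambda_2$ iff some $R$-characteristic map $\Lambda$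 over $\operatorname{wed}_vK$ has $\operatorname{proj}_{v_1}\Lambda=\lambda_1$, $\operatorname{proj}_{v_2}\Lambda=\lambda_2$ (links of $v_1,v_2$ identified with $K$ by sending the other of $v_1,v_2$ to $v$). $G(J)$ is the $1$-skeleton of $\prod_i\Delta^{j_i-1}$ with vertex set $I(J)$, edges joining vertices differing in exactly one coordinate $v$, colored $v$. A puzzle of $(K,J)$ is a color-preserving graph homomorphism $G(J)\to D'(K)$; it is realizable if it equals $\boldsymbol\alpha\mapsto\operatorname{proj}_{\sigma(\boldsymbol\alpha)}\Lambda$ for some $R$-characteristic map $\Lambda$ over $K(J)$. For nonempty $S_i\subseteq[j_i]$, the restriction of a puzzle to the induced subgraph on $\prod_i S_i$, identified with $G(J')$, $j'_i=|S_i|$, via order-preserving bijections, is a subpuzzle (a puzzle of $(K,J')$); it is a subcube if all $|S_i|\le 2$. *)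

theory Defs
  imports Complex_Main "HOL-Library.FuncSet" "HOL-Library.Z2"
begin

(* R^N is represented by functions nat => 'r vanishing at indices >= N.
   R = Z is the type int, R = Z_2 is the type bit (HOL-Library.Z2). *)

definition vecs :: "nat \<Rightarrow> (nat \<Rightarrow> 'r::zero) set" where
  "vecs N = {x. \<forall>i\<ge>N. x i = 0}"

definition lincomb :: "'a set \<Rightarrow> ('a \<Rightarrow> 'r::comm_ring_1) \<Rightarrow> ('a \<Rightarrow> nat \<Rightarrow> 'r) \<Rightarrow> nat \<Rightarrow> 'r" where
  "lincomb B c b = (\<lambda>r. \<Sum>a\<in>B. c a * b a r)"

definition is_basis :: "nat \<Rightarrow> 'a set \<Rightarrow> ('a \<Rightarrow> nat \<Rightarrow> 'r::comm_ring_1) \<Rightarrow> bool" where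
  "is_basis N B b \<longleftrightarrow> finite B \<and> (\<forall>a\<in>B. b a \<in> vecs N) \<and>
     (\<forall>x\<in>vecs N. \<exists>!c. (\<forall>a. a \<notin> B \<longrightarrow> c a = 0) \<and> x = lincomb B c b)"

definition rspan :: "'a set \<Rightarrow> ('a \<Rightarrow> nat \<Rightarrow> 'r::comm_ring_1) \<Rightarrow> (nat \<Rightarrow> 'r) set" where
  "rspan B b = {lincomb B c b | c. True}"

(* R-linear maps R^N -> R^n, given by n x N matrices *)
definition lin_maps :: "nat \<Rightarrow> nat \<Rightarrow> (nat \<Rightarrow> nat \<Rightarrow> 'r::comm_ring_1) set" where
  "lin_maps N n = {A. \<forall>r c. (n \<le> r \<or> N \<le> c) \<longrightarrow> A r c = 0}"

definition matapp :: "nat \<Rightarrow> (nat \<Rightarrow> nat \<Rightarrow> 'r::comm_ring_1) \<Rightarrow> (nat \<Rightarrow> 'r) \<Rightarrow> nat \<Rightarrow> 'r" where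
  "matapp N A x = (\<lambda>r. \<Sum>c<N. A r c * x c)"

definition simplicial_complex_on :: "'v set \<Rightarrow> 'v set set \<Rightarrow> bool" where
  "simplicial_complex_on V L \<longleftrightarrow> finite V \<and> L \<subseteq> Pow V \<and> {} \<in> L \<and>
     (\<forall>F\<in>L. \<forall>G. G \<subseteq> F \<longrightarrow> G \<in> L) \<and> (\<forall>v\<in>V. {v} \<in> L)"

definition min_nonfaces :: "'v set \<Rightarrow> 'v set set \<Rightarrow> 'v set set" where
  "min_nonfaces V L = {\<tau>. \<tau> \<subseteq> V \<and> \<tau> \<notin> L \<and> (\<forall>v\<in>\<tau>. \<tau> - {v} \<in> L)}"

definition pos_cone :: "(nat \<Rightarrow> nat \<Rightarrow> real) \<Rightarrow> nat set \<Rightarrow> (nat \<Rightarrow> real) set" where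
  "pos_cone w \<sigma> = {(\<lambda>r. \<Sum>i\<in>\<sigma>. c i * w i r) | c. \<forall>i\<in>\<sigma>. 0 \<le> c i}"

(* K is an (n-1)-dimensional star-shaped simplicial sphere on [m]:
   a pure (n-1)-dimensional simplicial complex on {1..m} which is the underlying
   complex of a complete simplicial fan in R^n *)
definition star_shaped_sphere :: "nat \<Rightarrow> nat \<Rightarrow> nat set set \<Rightarrow> bool" where
  "star_shaped_sphere m n K \<longleftrightarrow> simplicial_complex_on {1..m} K \<and>
     (\<forall>\<sigma>\<in>K. \<exists>F\<in>K. \<sigma> \<subseteq> F \<and> card F = n) \<and> (\<forall>\<sigma>\<in>K. card \<sigma> \<le> n) \<and>
     (\<exists>w::nat \<Rightarrow> nat \<Rightarrow> real.
        (\<forall>i\<in>{1..m}. w i \<in> vecs n) \<and>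
        (\<forall>\<sigma>\<in>K. \<forall>c. (\<lambda>r. \<Sum>i\<in>\<sigma>. c i * w i r) = (\<lambda>r. 0) \<longrightarrow> (\<forall>i\<in>\<sigma>. c i = 0)) \<and>
        (\<Union>\<sigma>\<in>K. pos_cone w \<sigma>) = vecs n \<and>
        (\<forall>\<sigma>\<in>K. \<forall>\<tau>\<in>K. pos_cone w \<sigma> \<inter> pos_cone w \<tau> = pos_cone w (\<sigma> \<inter> \<tau>)))"

definition char_map :: "'v set set \<Rightarrow> 'v set \<Rightarrow> nat \<Rightarrow> ('v \<Rightarrow> nat \<Rightarrow> 'r::comm_ring_1) \<Rightarrow> bool" where
  "char_map L V N lam \<longleftrightarrow> (\<forall>v\<in>V. lam v \<in> vecs N) \<and> (\<forall>F\<in>L. card F = N \<longrightarrow> is_basis N F lam)"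

(* K(J): vertex i_k is the pair (i,k) *)
definition KJ_verts :: "nat \<Rightarrow> (nat \<Rightarrow> nat) \<Rightarrow> (nat \<times> nat) set" where
  "KJ_verts m J = (SIGMA i:{1..m}. {1..J i})"

definition KJ :: "nat set set \<Rightarrow> nat \<Rightarrow> (nat \<Rightarrow> nat) \<Rightarrow> (nat \<times> nat) set set" where
  "KJ K m J = {S. S \<subseteq> KJ_verts m J \<and>
      (\<forall>\<tau>\<in>min_nonfaces {1..m} K. \<not> (SIGMA i:\<tau>. {1..J i}) \<subseteq> S)}"

(* dimension N' of the ambient lattice of K(J): |vertices| - m + n *)
definition dimJ :: "nat \<Rightarrow> nat \<Rightarrow> (nat \<Rightarrow> nat) \<Rightarrow> nat" where
  "dimJ m n J = n + (\<Sum>i=1..m. J i - 1)"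

definition I_J :: "nat \<Rightarrow> (nat \<Rightarrow> nat) \<Rightarrow> (nat \<Rightarrow> nat) set" where
  "I_J m J = PiE {1..m} (\<lambda>i. {1..J i})"

definition sigma_face :: "nat \<Rightarrow> (nat \<Rightarrow> nat) \<Rightarrow> (nat \<Rightarrow> nat) \<Rightarrow> (nat \<times> nat) set" where
  "sigma_face m J \<alpha> = KJ_verts m J - {(i, \<alpha> i) | i. i \<in> {1..m}}"

(* mu (a characteristic map over K, vertices 1..m, in R^n) represents the D-J class of
   proj_{sigma(alpha)} Lambda, with link sigma(alpha) identified with K via i_{alpha_i} -> i:
   there is a surjective R-linear map R^N' -> R^n with kernel the span of
   Lambda(sigma(alpha)) (i.e. an identification of the quotient with R^n) sending
   Lambda(i_{alpha_i}) to mu(i). *)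
definition proj_rep :: "nat \<Rightarrow> nat \<Rightarrow> (nat \<Rightarrow> nat) \<Rightarrow> (nat \<times> nat \<Rightarrow> nat \<Rightarrow> 'r::comm_ring_1)
     \<Rightarrow> (nat \<Rightarrow> nat) \<Rightarrow> (nat \<Rightarrow> nat \<Rightarrow> 'r) \<Rightarrow> bool" where
  "proj_rep m n J \<Lambda> \<alpha> \<mu> \<longleftrightarrow>
     (\<exists>A\<in>lin_maps (dimJ m n J) n.
        matapp (dimJ m n J) A ` vecs (dimJ m n J) = vecs n \<and>
        {x \<in> vecs (dimJ m n J). matapp (dimJ m n J) A x = (\<lambda>r. 0)}
           = rspan (sigma_face m J \<alpha>) \<Lambda> \<and>
        (\<forall>i\<in>{1..m}. \<mu> i = matapp (dimJ m n J) A (\<Lambda> (i, \<alpha> i))))"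

(* J for wed_v K *)
definition wedgeJ :: "nat \<Rightarrow> nat \<Rightarrow> nat" where
  "wedgeJ v = (\<lambda>i. if i = v then 2 else 1)"

(* edge of colour v in the pre-diagram D'(K) between the classes of mu1, mu2 *)
definition Dedge :: "nat set set \<Rightarrow> nat \<Rightarrow> nat \<Rightarrow> nat \<Rightarrow> (nat \<Rightarrow> nat \<Rightarrow> 'r::comm_ring_1)
     \<Rightarrow> (nat \<Rightarrow> nat \<Rightarrow> 'r) \<Rightarrow> bool" where
  "Dedge K m n v \<mu>1 \<mu>2 \<longleftrightarrow>
     (\<exists>\<Lambda>. char_map (KJ K m (wedgeJ v)) (KJ_verts m (wedgeJ v)) (dimJ m n (wedgeJ v)) \<Lambda> \<and>
        proj_rep m n (wedgeJ v) \<Lambda> (restrict (\<lambda>i. if i = v then 2 else 1) {1..m}) \<mu>1 \<and>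
        proj_rep m n (wedgeJ v) \<Lambda> (restrict (\<lambda>i. 1) {1..m}) \<mu>2)"

definition adjacent :: "nat \<Rightarrow> nat \<Rightarrow> (nat \<Rightarrow> nat) \<Rightarrow> (nat \<Rightarrow> nat) \<Rightarrow> bool" where
  "adjacent m v \<alpha> \<beta> \<longleftrightarrow> v \<in> {1..m} \<and> \<alpha> v \<noteq> \<beta> v \<and> (\<forall>i\<in>{1..m}. i \<noteq> v \<longrightarrow> \<alpha> i = \<beta> i)"

(* a puzzle of (K,J): p alpha is a representative of the D-J class assigned to alpha *)
definition puzzle :: "nat set set \<Rightarrow> nat \<Rightarrow> nat \<Rightarrow> (nat \<Rightarrow> nat)
     \<Rightarrow> ((nat \<Rightarrow> nat) \<Rightarrow> nat \<Rightarrow> nat \<Rightarrow> 'r::comm_ring_1) \<Rightarrow> bool" where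
  "puzzle K m n J p \<longleftrightarrow> (\<forall>\<alpha>\<in>I_J m J. char_map K {1..m} n (p \<alpha>)) \<and>
     (\<forall>\<alpha>\<in>I_J m J. \<forall>\<beta>\<in>I_J m J. \<forall>v. adjacent m v \<alpha> \<beta> \<longrightarrow> Dedge K m n v (p \<alpha>) (p \<beta>))"

definition realizable :: "nat set set \<Rightarrow> nat \<Rightarrow> nat \<Rightarrow> (nat \<Rightarrow> nat)
     \<Rightarrow> ((nat \<Rightarrow> nat) \<Rightarrow> nat \<Rightarrow> nat \<Rightarrow> 'r::comm_ring_1) \<Rightarrow> bool" where
  "realizable K m n J p \<longleftrightarrow>
     (\<exists>\<Lambda>. char_map (KJ K m J) (KJ_verts m J) (dimJ m n J) \<Lambda> \<and>
        (\<forall>\<alpha>\<in>I_J m J. proj_rep m n J \<Lambda> \<alpha> (p \<alpha>)))"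

definition ord_emb :: "nat set \<Rightarrow> nat \<Rightarrow> nat" where
  "ord_emb S k = sorted_list_of_set S ! (k - 1)"

(* the restriction of p to prod_i S_i, viewed as a puzzle of (K,J'), J'_i = |S_i| *)
definition subpuzzle :: "nat \<Rightarrow> (nat \<Rightarrow> nat set) \<Rightarrow> ((nat \<Rightarrow> nat) \<Rightarrow> 'a) \<Rightarrow> (nat \<Rightarrow> nat) \<Rightarrow> 'a" where
  "subpuzzle m S p = (\<lambda>\<beta>. p (restrict (\<lambda>i. ord_emb (S i) (\<beta> i)) {1..m}))"

end

theory Submission
  imports Defs
begin


lemma if01_mult: "(if P then 1 else 0) * (x::'r::comm_ring_1) = (if P then x else 0)" by simp

lemma vecs_sum: "(\<forall>t\<in>T. v t \<in> vecs N) \<Longrightarrow> (\<lambda>r. \<Sum>t\<in>T. a t * (v t r :: 'r::comm_ring_1)) \<in> vecs N"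
  by (auto simp: vecs_def intro!: sum.neutral)

lemma lincomb_vecs: "(\<forall>t\<in>T. v t \<in> vecs N) \<Longrightarrow> lincomb T c (v :: _ \<Rightarrow> nat \<Rightarrow> 'r::comm_ring_1) \<in> vecs N"
  unfolding lincomb_def by (rule vecs_sum)

lemma vecsD: "x \<in> vecs N \<Longrightarrow> N \<le> i \<Longrightarrow> x i = 0"
  by (auto simp: vecs_def)

lemma rspan_gen: "finite B \<Longrightarrow> t \<in> B \<Longrightarrow> (b t :: nat \<Rightarrow> 'r::comm_ring_1) \<in> rspan B b"
  unfolding rspan_def lincomb_def
  by (rule CollectI, rule exI[of _ "\<lambda>s. if s = t then 1 else 0"]) (simp add: if01_mult)

lemma rspan_zero: "(\<lambda>r. 0 :: 'r::comm_ring_1) \<in> rspan B b"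
  unfolding rspan_def lincomb_def by (auto intro!: exI[of _ "\<lambda>_. 0"])

lemma rspan_add: "x \<in> rspan B b \<Longrightarrow> y \<in> rspan B b \<Longrightarrow> (\<lambda>r. x r + y r :: 'r::comm_ring_1) \<in> rspan B b"
  unfolding rspan_def lincomb_def
  apply clarsimp
  subgoal for c d by (rule exI[of _ "\<lambda>s. c s + d s"]) (simp add: distrib_right sum.distrib)
  done

lemma rspan_smult: "x \<in> rspan B b \<Longrightarrow> (\<lambda>r. a * x r :: 'r::comm_ring_1) \<in> rspan B b"
  unfolding rspan_def lincomb_def
  apply clarsimp
  subgoal for c by (rule exI[of _ "\<lambda>s. a * c s"]) (simp add: sum_distrib_left mult.assoc)
  done

lemma rspan_sum: "finite I \<Longrightarrow> (\<forall>i\<in>I. f i \<in> rspan B b) \<Longrightarrow> (\<lambda>r. \<Sum>i\<in>I. f i r :: 'r::comm_ring_1) \<in> rspan B b"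
proof (induction I rule: finite_induct)
  case empty thus ?case using rspan_zero by simp
next
  case (insert x F)
  then show ?case using rspan_add[of "f x" B b "\<lambda>r. \<Sum>i\<in>F. f i r"] by simp
qed

lemma rspan_lc: "finite B \<Longrightarrow> finite I \<Longrightarrow> (\<forall>i\<in>I. g i \<in> B) \<Longrightarrow>
   (\<lambda>r. \<Sum>i\<in>I. a i * b (g i) r :: 'r::comm_ring_1) \<in> rspan B b"
  by (rule rspan_sum) (auto intro: rspan_smult rspan_gen)

lemma rspan_diff: "x \<in> rspan B b \<Longrightarrow> y \<in> rspan B b \<Longrightarrow> (\<lambda>r. x r - y r :: 'r::comm_ring_1) \<in> rspan B b"
  using rspan_add[of x B b "\<lambda>r. (-1) * y r"] rspan_smult[of y B b "-1"] by simp

lemma rspan_cong: "x \<in> rspan B b \<Longrightarrow> (\<And>r. x r = y r) \<Longrightarrow> y \<in> rspan B b"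
  by (metis ext)

lemma rspan_vecs: "(\<forall>t\<in>B. b t \<in> vecs N) \<Longrightarrow> x \<in> rspan B (b :: _ \<Rightarrow> nat \<Rightarrow> 'r::comm_ring_1) \<Longrightarrow> x \<in> vecs N"
  unfolding rspan_def using lincomb_vecs by blast

lemma rspan_mono: "finite B' \<Longrightarrow> B \<subseteq> B' \<Longrightarrow> x \<in> rspan B b \<Longrightarrow> x \<in> rspan B' (b :: _ \<Rightarrow> nat \<Rightarrow> 'r::comm_ring_1)"
proof -
  assume a: "finite B'" "B \<subseteq> B'" "x \<in> rspan B b"
  then obtain c where x: "x = lincomb B c b" unfolding rspan_def by blast
  have "(\<lambda>r. \<Sum>t\<in>B. c t * b (id t) r) \<in> rspan B' b"
    by (rule rspan_lc) (use a finite_subset in auto)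
  then show ?thesis using x unfolding lincomb_def by simp
qed

section \<open>Coefficients w.r.t. a basis\<close>

definition coef :: "nat \<Rightarrow> 'a set \<Rightarrow> ('a \<Rightarrow> nat \<Rightarrow> 'r::comm_ring_1) \<Rightarrow> (nat \<Rightarrow> 'r) \<Rightarrow> 'a \<Rightarrow> 'r" where
  "coef N G b y = (THE c. (\<forall>a. a \<notin> G \<longrightarrow> c a = 0) \<and> y = lincomb G c b)"

lemma coef_props:
  assumes "is_basis N G b" "y \<in> vecs N"
  shows "(\<forall>a. a \<notin> G \<longrightarrow> coef N G b y a = 0) \<and> y = lincomb G (coef N G b y) b"
proof -
  have ex: "\<exists>!c. (\<forall>a. a \<notin> G \<longrightarrow> c a = 0) \<and> y = lincomb G c b"
    using assms unfolding is_basis_def by blast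
  show ?thesis unfolding coef_def by (rule theI'[OF ex])
qed

lemma coef_repr:
  assumes "is_basis N G b" "y \<in> vecs N"
  shows "y = (\<lambda>r. \<Sum>g\<in>G. coef N G b y g * b g r)"
  using coef_props[OF assms] unfolding lincomb_def by simp

lemma coef_eq:
  assumes "is_basis N G b" "\<forall>a. a \<notin> G \<longrightarrow> c a = 0" "y = lincomb G c b"
  shows "coef N G b y = c"
proof -
  have yv: "y \<in> vecs N" using assms lincomb_vecs unfolding is_basis_def by metis
  have ex: "\<exists>!c. (\<forall>a. a \<notin> G \<longrightarrow> c a = 0) \<and> y = lincomb G c b"
    using assms yv unfolding is_basis_def by blast
  show ?thesis unfolding coef_def by (rule the1_equality[OF ex]) (use assms in simp)
qed

lemma coef_sum:
  assumes B: "is_basis N G b" and u: "\<forall>t\<in>I. u t \<in> vecs N" and fin: "finite I"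
  shows "coef N G b (\<lambda>r. \<Sum>t\<in>I. a t * u t r) = (\<lambda>g. \<Sum>t\<in>I. a t * coef N G b (u t) g)"
proof (rule coef_eq[OF B])
  show "\<forall>x. x \<notin> G \<longrightarrow> (\<Sum>t\<in>I. a t * coef N G b (u t) x) = 0"
    using coef_props[OF B] u by (auto intro!: sum.neutral)
  have "lincomb G (\<lambda>g. \<Sum>t\<in>I. a t * coef N G b (u t) g) b
     = (\<lambda>r. \<Sum>t\<in>I. a t * (\<Sum>g\<in>G. coef N G b (u t) g * b g r))"
    unfolding lincomb_def sum_distrib_right sum_distrib_left mult.assoc by (rule ext, rule sum.swap)
  also have "\<dots> = (\<lambda>r. \<Sum>t\<in>I. a t * u t r)"
  proof (rule ext, rule sum.cong[OF refl])
    fix r t assume t: "t \<in> I"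
    show "a t * (\<Sum>g\<in>G. coef N G b (u t) g * b g r) = a t * u t r"
      using fun_cong[OF coef_repr[OF B, of "u t"], of r] u t by simp
  qed
  finally show "(\<lambda>r. \<Sum>t\<in>I. a t * u t r) = lincomb G (\<lambda>g. \<Sum>t\<in>I. a t * coef N G b (u t) g) b" by simp
qed

lemma coef_gen:
  assumes B: "is_basis N G b" and g: "g \<in> G"
  shows "coef N G b (b g) = (\<lambda>h. if h = g then 1 else 0)"
proof (rule coef_eq[OF B])
  show "\<forall>a. a \<notin> G \<longrightarrow> (if a = g then 1 else 0) = 0" using g by auto
  have "finite G" using B unfolding is_basis_def by simp
  then show "b g = lincomb G (\<lambda>h. if h = g then 1 else 0) b"
    unfolding lincomb_def using g by (simp add: if01_mult)
qed

lemma basis_fin: "is_basis N G b \<Longrightarrow> finite G" unfolding is_basis_def by simp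
lemma basis_vecs: "is_basis N G b \<Longrightarrow> g \<in> G \<Longrightarrow> b g \<in> vecs N" unfolding is_basis_def by simp

lemma coef_lc:
  assumes B: "is_basis N G b" and fin: "finite I" and g: "\<forall>t\<in>I. f t \<in> G"
  shows "coef N G b (\<lambda>r. \<Sum>t\<in>I. a t * b (f t) r) = (\<lambda>h. \<Sum>t\<in>I. a t * (if h = f t then 1 else 0))"
  using coef_sum[OF B _ fin, of "\<lambda>t. b (f t)" a] g coef_gen[OF B] basis_vecs[OF B] by auto

lemma basis_indep:
  assumes B: "is_basis N G b" and c: "\<forall>a. a \<notin> G \<longrightarrow> c a = 0" and z: "lincomb G c b = (\<lambda>r. 0)"
  shows "c a = 0"
proof -
  have "coef N G b (\<lambda>r. 0) = c" using coef_eq[OF B c] z by simp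
  moreover have "coef N G b (\<lambda>r. 0) = (\<lambda>_. 0)"
    by (rule coef_eq[OF B]) (auto simp: lincomb_def)
  ultimately show ?thesis by (metis)
qed




section \<open>Structure of K(J)\<close>

definition goodK :: "nat set set \<Rightarrow> nat \<Rightarrow> nat \<Rightarrow> bool" where
  "goodK K m n \<longleftrightarrow> K \<subseteq> Pow {1..m} \<and> {} \<in> K \<and> (\<forall>F\<in>K. \<forall>G. G \<subseteq> F \<longrightarrow> G \<in> K) \<and>
     (\<forall>v\<in>{1..m}. {v} \<in> K) \<and> (\<forall>\<sigma>\<in>K. \<exists>F\<in>K. \<sigma> \<subseteq> F \<and> card F = n) \<and> (\<forall>\<sigma>\<in>K. card \<sigma> \<le> n)"

lemma star_goodK:
  assumes "star_shaped_sphere m n K" shows "goodK K m n"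
proof -
  have h: "simplicial_complex_on {1..m} K" "\<forall>\<sigma>\<in>K. \<exists>F\<in>K. \<sigma> \<subseteq> F \<and> card F = n" "\<forall>\<sigma>\<in>K. card \<sigma> \<le> n"
    using assms[unfolded star_shaped_sphere_def, THEN conjunct1]
      assms[unfolded star_shaped_sphere_def, THEN conjunct2, THEN conjunct1]
      assms[unfolded star_shaped_sphere_def, THEN conjunct2, THEN conjunct2, THEN conjunct1] by auto
  then have s: "K \<subseteq> Pow {1..m}" "{} \<in> K" "\<forall>F\<in>K. \<forall>G. G \<subseteq> F \<longrightarrow> G \<in> K" "\<forall>v\<in>{1..m}. {v} \<in> K"
    unfolding simplicial_complex_on_def by auto
  show ?thesis unfolding goodK_def using s h(2,3) by (intro conjI)
qed

lemma goodK_D: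
  assumes g: "goodK K m n"
  shows "K \<subseteq> Pow {1..m}" "{} \<in> K" "\<forall>F\<in>K. \<forall>G. G \<subseteq> F \<longrightarrow> G \<in> K"
    "\<forall>v\<in>{1..m}. {v} \<in> K" "\<forall>\<sigma>\<in>K. \<exists>F\<in>K. \<sigma> \<subseteq> F \<and> card F = n" "\<forall>\<sigma>\<in>K. card \<sigma> \<le> n"
proof -
  note h = g[unfolded goodK_def]
  show "K \<subseteq> Pow {1..m}" using h by (rule conjunct1)
  show "{} \<in> K" using h[THEN conjunct2] by (rule conjunct1)
  show "\<forall>F\<in>K. \<forall>G. G \<subseteq> F \<longrightarrow> G \<in> K" using h[THEN conjunct2, THEN conjunct2] by (rule conjunct1)
  show "\<forall>v\<in>{1..m}. {v} \<in> K" using h[THEN conjunct2, THEN conjunct2, THEN conjunct2] by (rule conjunct1)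
  show "\<forall>\<sigma>\<in>K. \<exists>F\<in>K. \<sigma> \<subseteq> F \<and> card F = n" using h[THEN conjunct2, THEN conjunct2, THEN conjunct2, THEN conjunct2] by (rule conjunct1)
  show "\<forall>\<sigma>\<in>K. card \<sigma> \<le> n" using h[THEN conjunct2, THEN conjunct2, THEN conjunct2, THEN conjunct2] by (rule conjunct2)
qed

lemma goodK_facet: "goodK K m n \<Longrightarrow> \<sigma> \<in> K \<Longrightarrow> \<exists>F\<in>K. \<sigma> \<subseteq> F \<and> card F = n"
  using goodK_D(5) by metis

lemma goodK_sub: assumes "goodK K m n" "F \<in> K" shows "F \<subseteq> {1..m}"
  using goodK_D(1)[OF assms(1)] assms(2) by blast

lemma goodK_down: "goodK K m n \<Longrightarrow> F \<in> K \<Longrightarrow> G \<subseteq> F \<Longrightarrow> G \<in> K"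
  using goodK_D(3) by metis

lemma goodK_card: "goodK K m n \<Longrightarrow> F \<in> K \<Longrightarrow> card F \<le> n"
  using goodK_D(6) by metis

lemma goodK_empty: "goodK K m n \<Longrightarrow> {} \<in> K"
  using goodK_D(2) by metis

lemma goodK_single: "goodK K m n \<Longrightarrow> v \<in> {1..m} \<Longrightarrow> {v} \<in> K"
  using goodK_D(4) by metis

lemma I_J_mem: "\<alpha> \<in> I_J m J \<Longrightarrow> i \<in> {1..m} \<Longrightarrow> \<alpha> i \<in> {1..J i}"
  unfolding I_J_def by auto

lemma I_J_out: "\<alpha> \<in> I_J m J \<Longrightarrow> i \<notin> {1..m} \<Longrightarrow> \<alpha> i = undefined"
  unfolding I_J_def by auto

lemma I_J_eqI: "\<alpha> \<in> I_J m J \<Longrightarrow> \<beta> \<in> I_J m J \<Longrightarrow> (\<forall>i\<in>{1..m}. \<alpha> i = \<beta> i) \<Longrightarrow> \<alpha> = \<beta>"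
  unfolding I_J_def by (auto intro: PiE_ext)

lemma sigma_face_iff: "\<alpha> \<in> I_J m J \<Longrightarrow>
   (i, k) \<in> sigma_face m J \<alpha> \<longleftrightarrow> i \<in> {1..m} \<and> k \<in> {1..J i} \<and> k \<noteq> \<alpha> i"
  unfolding sigma_face_def KJ_verts_def by auto

lemma verts_iff: "(i, k) \<in> KJ_verts m J \<longleftrightarrow> i \<in> {1..m} \<and> k \<in> {1..J i}"
  unfolding KJ_verts_def by auto

lemma finite_verts: "finite (KJ_verts m J)"
  unfolding KJ_verts_def by auto

lemma sigma_sub: "sigma_face m J \<alpha> \<subseteq> KJ_verts m J"
  unfolding sigma_face_def by auto

lemma finite_sigma: "finite (sigma_face m J \<alpha>)"
  using finite_subset[OF sigma_sub finite_verts] .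

definition graph :: "(nat \<Rightarrow> nat) \<Rightarrow> nat set \<Rightarrow> (nat \<times> nat) set" where
  "graph \<alpha> F = (\<lambda>i. (i, \<alpha> i)) ` F"

lemma card_graph: "card (graph \<alpha> F) = card F"
  unfolding graph_def by (rule card_image) (auto simp: inj_on_def)

lemma sum_J_minus: "(\<forall>i\<in>{1..m}. 1 \<le> (J i::nat)) \<Longrightarrow> (\<Sum>i=1..m. J i) - m = (\<Sum>i=1..m. J i - 1)"
proof -
  assume a: "\<forall>i\<in>{1..m}. 1 \<le> J i"
  have "(\<Sum>i=1..m. J i - 1) = (\<Sum>i=1..m. J i) - (\<Sum>i=1..m. (1::nat))"
    by (rule sum_subtractf_nat) (use a in auto)
  then show ?thesis by simp
qed

lemma card_sigma:
  assumes \<alpha>: "\<alpha> \<in> I_J m J" and J1: "\<forall>i\<in>{1..m}. 1 \<le> J i"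
  shows "card (sigma_face m J \<alpha>) = dimJ m n J - n"
proof -
  have gs: "graph \<alpha> {1..m} \<subseteq> KJ_verts m J" using I_J_mem[OF \<alpha>] unfolding graph_def KJ_verts_def by auto
  have eq: "sigma_face m J \<alpha> = KJ_verts m J - graph \<alpha> {1..m}"
    unfolding sigma_face_def graph_def by auto
  have cv: "card (KJ_verts m J) = (\<Sum>i=1..m. J i)"
    unfolding KJ_verts_def by (simp add: card_SigmaI)
  have "card (sigma_face m J \<alpha>) = (\<Sum>i=1..m. J i) - m"
    unfolding eq using card_Diff_subset[OF finite_subset[OF gs finite_verts] gs] cv card_graph[of \<alpha> "{1..m}"]
    by simp
  then show ?thesis unfolding dimJ_def using sum_J_minus[OF J1] by simp
qed

definition fct :: "nat \<Rightarrow> (nat \<Rightarrow> nat) \<Rightarrow> (nat \<Rightarrow> nat) \<Rightarrow> nat set \<Rightarrow> (nat \<times> nat) set" where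
  "fct m J \<alpha> F = sigma_face m J \<alpha> \<union> graph \<alpha> F"

lemma graph_disj: "F \<subseteq> {1..m} \<Longrightarrow> sigma_face m J \<alpha> \<inter> graph \<alpha> F = {}"
  unfolding sigma_face_def graph_def by auto

lemma card_fct:
  assumes \<alpha>: "\<alpha> \<in> I_J m J" and J1: "\<forall>i\<in>{1..m}. 1 \<le> J i" and F: "F \<subseteq> {1..m}" "card F = n"
  shows "card (fct m J \<alpha> F) = dimJ m n J"
proof -
  have fF: "finite F" using F finite_subset by blast
  have "card (fct m J \<alpha> F) = card (sigma_face m J \<alpha>) + card (graph \<alpha> F)"
    unfolding fct_def by (rule card_Un_disjoint) (use finite_sigma fF graph_disj[OF F(1)] in \<open>auto simp: graph_def\<close>)
  also have "\<dots> = dimJ m n J - n + n" using card_sigma[OF \<alpha> J1] card_graph F by simp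
  also have "\<dots> = dimJ m n J" unfolding dimJ_def by simp
  finally show ?thesis .
qed

lemma fct_in_KJ:
  assumes gK: "goodK K m n" and \<alpha>: "\<alpha> \<in> I_J m J" and F: "F \<in> K"
  shows "fct m J \<alpha> F \<in> KJ K m J"
proof -
  have Fs: "F \<subseteq> {1..m}" using goodK_sub[OF gK F] .
  have sub: "fct m J \<alpha> F \<subseteq> KJ_verts m J"
    using sigma_sub I_J_mem[OF \<alpha>] Fs unfolding fct_def graph_def KJ_verts_def by auto
  have "\<not> (SIGMA i:\<tau>. {1..J i}) \<subseteq> fct m J \<alpha> F" if \<tau>: "\<tau> \<in> min_nonfaces {1..m} K" for \<tau>
  proof
    assume S: "(SIGMA i:\<tau>. {1..J i}) \<subseteq> fct m J \<alpha> F"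
    have "\<tau> \<notin> K" "\<tau> \<subseteq> {1..m}" using \<tau> unfolding min_nonfaces_def by auto
    then have "\<not> \<tau> \<subseteq> F" using goodK_down[OF gK F] by blast
    then obtain i where i: "i \<in> \<tau>" "i \<notin> F" by blast
    have im: "i \<in> {1..m}" using i \<open>\<tau> \<subseteq> {1..m}\<close> by auto
    have "(i, \<alpha> i) \<in> (SIGMA i:\<tau>. {1..J i})" using I_J_mem[OF \<alpha> im] i by auto
    moreover have "(i, \<alpha> i) \<notin> fct m J \<alpha> F" using i im unfolding fct_def graph_def sigma_face_def by auto
    ultimately show False using S by blast
  qed
  then show ?thesis unfolding KJ_def using sub by blast
qed

lemma exists_min_nonface:
  assumes gK: "goodK K m n" and H: "H \<subseteq> {1..m}" "H \<notin> K"
  shows "\<exists>\<tau>\<in>min_nonfaces {1..m} K. \<tau> \<subseteq> H"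
proof -
  have fH: "finite H" using H finite_subset by blast
  let ?P = "\<lambda>T. T \<subseteq> H \<and> T \<notin> K"
  obtain T where T: "?P T" "\<And>T'. ?P T' \<Longrightarrow> card T \<le> card T'"
    using ex_has_least_nat[of ?P H card] H by blast
  have "T \<in> min_nonfaces {1..m} K"
    unfolding min_nonfaces_def
  proof (intro CollectI conjI ballI)
    show "T \<subseteq> {1..m}" using T H by auto
    show "T \<notin> K" using T by auto
    fix v assume v: "v \<in> T"
    have fT: "finite T" using T fH finite_subset by blast
    show "T - {v} \<in> K"
    proof (rule ccontr)
      assume "T - {v} \<notin> K"
      then have "card T \<le> card (T - {v})" using T(1) by (intro T(2)) auto
      then show False using card_Diff1_less[OF fT v] by linarith
    qed
  qed
  then show ?thesis using T by blast
qed

lemma classify_facet: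
  assumes gK: "goodK K m n" and J1: "\<forall>i\<in>{1..m}. 1 \<le> J i"
    and G: "G \<in> KJ K m J" "card G = dimJ m n J"
  shows "\<exists>\<alpha>\<in>I_J m J. \<exists>F\<in>K. card F = n \<and> G = fct m J \<alpha> F"
proof -
  have Gs: "G \<subseteq> KJ_verts m J" and Gn: "\<forall>\<tau>\<in>min_nonfaces {1..m} K. \<not> (SIGMA i:\<tau>. {1..J i}) \<subseteq> G"
    using G unfolding KJ_def by auto
  define H where "H = {i\<in>{1..m}. \<forall>k\<in>{1..J i}. (i, k) \<in> G}"
  have Hs: "H \<subseteq> {1..m}" unfolding H_def by auto
  have HK: "H \<in> K"
  proof (rule ccontr)
    assume "H \<notin> K"
    then obtain \<tau> where \<tau>: "\<tau> \<in> min_nonfaces {1..m} K" "\<tau> \<subseteq> H" using exists_min_nonface[OF gK Hs] by blast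
    then have "(SIGMA i:\<tau>. {1..J i}) \<subseteq> G" unfolding H_def by auto
    then show False using Gn \<tau> by blast
  qed
  have "\<forall>i\<in>{1..m}. \<exists>k. k \<in> {1..J i} \<and> (i \<notin> H \<longrightarrow> (i, k) \<notin> G)"
  proof
    fix i assume i: "i \<in> {1..m}"
    show "\<exists>k. k \<in> {1..J i} \<and> (i \<notin> H \<longrightarrow> (i, k) \<notin> G)"
    proof (cases "i \<in> H")
      case True then show ?thesis using J1 i by (intro exI[of _ 1]) auto
    next
      case False then show ?thesis using i unfolding H_def by auto
    qed
  qed
  then obtain f where f: "\<forall>i\<in>{1..m}. f i \<in> {1..J i} \<and> (i \<notin> H \<longrightarrow> (i, f i) \<notin> G)"
    by metis
  define \<alpha> where "\<alpha> = restrict f {1..m}"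
  have \<alpha>I: "\<alpha> \<in> I_J m J" unfolding \<alpha>_def I_J_def using f by auto
  have sub: "G \<subseteq> fct m J \<alpha> H"
  proof
    fix v assume v: "v \<in> G"
    obtain i k where vik: "v = (i, k)" by (cases v)
    have ik: "i \<in> {1..m}" "k \<in> {1..J i}" using Gs v vik verts_iff by auto
    show "v \<in> fct m J \<alpha> H"
    proof (cases "k = \<alpha> i")
      case True
      then have "i \<in> H" using f ik v vik unfolding \<alpha>_def by auto
      then show ?thesis using True vik unfolding fct_def graph_def by auto
    next
      case False then show ?thesis using ik vik sigma_face_iff[OF \<alpha>I] unfolding fct_def by auto
    qed
  qed
  have fHH: "finite H" using Hs finite_subset by blast
  have fin: "finite (fct m J \<alpha> H)" unfolding fct_def graph_def using finite_sigma fHH by auto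
  have cH: "card H \<le> n" using goodK_card[OF gK HK] .
  have c1: "card (fct m J \<alpha> H) = card (sigma_face m J \<alpha>) + card H"
    unfolding fct_def using card_Un_disjoint[OF finite_sigma _ graph_disj[OF Hs]] Hs card_graph[of \<alpha> H]
    fHH unfolding graph_def by auto
  have "card G \<le> card (fct m J \<alpha> H)" using card_mono[OF fin sub] .
  then have "dimJ m n J \<le> dimJ m n J - n + card H" using G(2) c1 card_sigma[OF \<alpha>I J1] by simp
  then have cHn: "card H = n" using cH unfolding dimJ_def by linarith
  then have "card G = card (fct m J \<alpha> H)" using c1 card_sigma[OF \<alpha>I J1] G(2) unfolding dimJ_def by simp
  then have "G = fct m J \<alpha> H" using card_subset_eq[OF fin sub] by simp
  then show ?thesis using \<alpha>I HK cHn by blast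
qed

lemma graph_notin_sigma: "(i, \<alpha> i) \<notin> sigma_face m J \<alpha>"
  unfolding sigma_face_def KJ_verts_def by auto

lemma fct_basis:
  assumes gK: "goodK K m n" and J1: "\<forall>i\<in>{1..m}. 1 \<le> J i"
    and cm: "char_map (KJ K m J) (KJ_verts m J) (dimJ m n J) \<Lambda>"
    and \<alpha>: "\<alpha> \<in> I_J m J" and F: "F \<in> K" "card F = n"
  shows "is_basis (dimJ m n J) (fct m J \<alpha> F) \<Lambda>"
  using cm fct_in_KJ[OF gK \<alpha> F(1)] card_fct[OF \<alpha> J1 goodK_sub[OF gK F(1)] F(2)]
  unfolding char_map_def by blast




section \<open>Kernels and projections\<close>

definition supp :: "nat \<Rightarrow> (nat \<Rightarrow> 'r::zero) \<Rightarrow> bool" where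
  "supp m x \<longleftrightarrow> (\<forall>i. i \<notin> {1..m} \<longrightarrow> x i = 0)"

definition kerv :: "nat \<Rightarrow> (nat \<Rightarrow> nat \<Rightarrow> 'r::comm_ring_1) \<Rightarrow> (nat \<Rightarrow> 'r) set" where
  "kerv m \<mu> = {x. supp m x \<and> (\<lambda>r. \<Sum>i=1..m. x i * \<mu> i r) = (\<lambda>r. 0)}"

definition KerRel :: "nat \<Rightarrow> (nat \<Rightarrow> nat) \<Rightarrow> (nat \<times> nat \<Rightarrow> nat \<Rightarrow> 'r::comm_ring_1) \<Rightarrow> (nat \<Rightarrow> nat) \<Rightarrow> (nat \<Rightarrow> 'r) set" where
  "KerRel m J \<Lambda> \<alpha> = {x. supp m x \<and> (\<lambda>r. \<Sum>i=1..m. x i * \<Lambda> (i, \<alpha> i) r) \<in> rspan (sigma_face m J \<alpha>) \<Lambda>}"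

lemma mult_if01: "(x::'r::comm_ring_1) * (if P then 1 else 0) = (if P then x else 0)" by simp

lemma sum_if_sub: "finite S \<Longrightarrow> F \<subseteq> S \<Longrightarrow> (\<Sum>t\<in>S. (if t \<in> F then f t else 0)) = (\<Sum>t\<in>F. f t)"
  by (simp add: sum.If_cases Int_absorb1)

lemma matapp_sum:
  "matapp N A (\<lambda>r. \<Sum>t\<in>I. a t * v t r) = (\<lambda>r. \<Sum>t\<in>I. a t * matapp N A (v t) r :: 'r::comm_ring_1)"
  unfolding matapp_def
  by (rule ext) (simp add: sum_distrib_left mult.left_commute sum.swap[of _ "{..<N}"])

lemma vec_expand: "y \<in> vecs N \<Longrightarrow> y = (\<lambda>r. \<Sum>c<N. y c * (if r = c then 1 else 0) :: 'r::comm_ring_1)"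
  by (rule ext) (auto simp: mult_if01 vecs_def not_less)

lemma unit_vecs: "c < N \<Longrightarrow> (\<lambda>r. if r = c then 1 else 0 :: 'r::comm_ring_1) \<in> vecs N"
  by (auto simp: vecs_def)

lemma proj_ker:
  fixes \<Lambda> :: "nat \<times> nat \<Rightarrow> nat \<Rightarrow> 'r::comm_ring_1"
  assumes \<Lambda>v: "\<forall>v\<in>KJ_verts m J. \<Lambda> v \<in> vecs (dimJ m n J)" and \<alpha>: "\<alpha> \<in> I_J m J"
    and pr: "proj_rep m n J \<Lambda> \<alpha> \<mu>"
  shows "kerv m \<mu> = KerRel m J \<Lambda> \<alpha>"
proof -
  let ?N = "dimJ m n J"
  obtain A where A: "A \<in> lin_maps ?N n"
    "{x \<in> vecs ?N. matapp ?N A x = (\<lambda>r. 0)} = rspan (sigma_face m J \<alpha>) \<Lambda>"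
    "\<forall>i\<in>{1..m}. \<mu> i = matapp ?N A (\<Lambda> (i, \<alpha> i))"
    using pr unfolding proj_rep_def by blast
  have eq: "(\<lambda>r. \<Sum>i=1..m. x i * \<mu> i r) = matapp ?N A (\<lambda>r. \<Sum>i=1..m. x i * \<Lambda> (i, \<alpha> i) r)" for x
    unfolding matapp_sum using A(3) by (auto intro!: ext sum.cong)
  have wv: "(\<lambda>r. \<Sum>i=1..m. x i * \<Lambda> (i, \<alpha> i) r) \<in> vecs ?N" for x
    by (rule vecs_sum) (use \<Lambda>v I_J_mem[OF \<alpha>] verts_iff in auto)
  show ?thesis
    unfolding kerv_def KerRel_def eq using wv A(2) by blast
qed

lemma coefmat:
  fixes \<Lambda> :: "'a \<Rightarrow> nat \<Rightarrow> 'r::comm_ring_1"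
  assumes GB: "is_basis N G \<Lambda>" and fF: "finite F" and \<mu>v: "\<forall>i\<in>F. \<mu> i \<in> vecs n"
    and y: "y \<in> vecs N"
  shows "matapp N (\<lambda>r c. if r < n \<and> c < N then \<Sum>i\<in>F. coef N G \<Lambda> (\<lambda>r. if r = c then 1 else 0) (h i) * \<mu> i r else 0) y
        = (\<lambda>r. \<Sum>i\<in>F. coef N G \<Lambda> y (h i) * \<mu> i r)"
proof -
  let ?e = "\<lambda>c. (\<lambda>r. if r = c then 1 else 0 :: 'r)"
  have cy: "coef N G \<Lambda> y = (\<lambda>g. \<Sum>c<N. y c * coef N G \<Lambda> (?e c) g)"
    using coef_sum[OF GB, of "{..<N}" ?e y] unit_vecs vec_expand[OF y, symmetric] by auto
  show ?thesis
  proof (rule ext)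
    fix r
    show "matapp N (\<lambda>r c. if r < n \<and> c < N then \<Sum>i\<in>F. coef N G \<Lambda> (?e c) (h i) * \<mu> i r else 0) y r
        = (\<Sum>i\<in>F. coef N G \<Lambda> y (h i) * \<mu> i r)"
    proof (cases "r < n")
      case True
      then show ?thesis unfolding matapp_def cy
        by (simp add: sum_distrib_left sum_distrib_right mult_ac sum.swap[of _ F])
    next
      case False
      then have "\<forall>i\<in>F. \<mu> i r = 0" using \<mu>v by (auto simp: vecs_def)
      then show ?thesis using False unfolding matapp_def by simp
    qed
  qed
qed

lemma sum_delta_minus:
  assumes "finite S" "i \<in> S" "F \<subseteq> S"
  shows "(\<Sum>t\<in>S. ((if t = i then 1 else 0) - (if t \<in> F then a t else 0)) * (v t :: 'r::comm_ring_1))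
       = v i - (\<Sum>t\<in>F. a t * v t)"
proof -
  have "(\<Sum>t\<in>S. ((if t = i then 1 else 0) - (if t \<in> F then a t else 0)) * v t)
      = (\<Sum>t\<in>S. (if t = i then v t else 0)) - (\<Sum>t\<in>S. (if t \<in> F then a t * v t else 0))"
    by (simp add: left_diff_distrib sum_subtractf if_distrib[of "\<lambda>x. x * v _"] cong: if_cong)
  also have "\<dots> = v i - (\<Sum>t\<in>F. a t * v t)" using assms by (simp add: sum_if_sub)
  finally show ?thesis .
qed

lemma ker_proj:
  fixes \<Lambda> :: "nat \<times> nat \<Rightarrow> nat \<Rightarrow> 'r::comm_ring_1" and \<mu> :: "nat \<Rightarrow> nat \<Rightarrow> 'r"
  assumes gK: "goodK K m n" and J1: "\<forall>i\<in>{1..m}. 1 \<le> J i"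
    and cm: "char_map (KJ K m J) (KJ_verts m J) (dimJ m n J) \<Lambda>"
    and \<alpha>: "\<alpha> \<in> I_J m J" and mu: "char_map K {1..m} n \<mu>"
    and eq: "kerv m \<mu> = KerRel m J \<Lambda> \<alpha>"
  shows "proj_rep m n J \<Lambda> \<alpha> \<mu>"
proof -
  let ?N = "dimJ m n J"
  let ?\<sigma> = "sigma_face m J \<alpha>"
  obtain F where F: "F \<in> K" "card F = n" using goodK_facet[OF gK goodK_empty[OF gK]] by blast
  have Fs: "F \<subseteq> {1..m}" using goodK_sub[OF gK F(1)] .
  have fF: "finite F" using Fs finite_subset by blast
  let ?G = "fct m J \<alpha> F"
  have GB: "is_basis ?N ?G \<Lambda>" using fct_basis[OF gK J1 cm \<alpha> F] .
  have \<mu>B: "is_basis n F \<mu>" using mu F unfolding char_map_def by blast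
  have \<mu>v: "\<forall>i\<in>F. \<mu> i \<in> vecs n" using mu Fs unfolding char_map_def by blast
  have \<mu>v': "\<forall>i\<in>{1..m}. \<mu> i \<in> vecs n" using mu unfolding char_map_def by blast
  have \<Lambda>v: "\<forall>v\<in>KJ_verts m J. \<Lambda> v \<in> vecs ?N" using cm unfolding char_map_def by blast
  have graphv: "(i, \<alpha> i) \<in> KJ_verts m J" if "i \<in> {1..m}" for i
    using I_J_mem[OF \<alpha> that] verts_iff that by auto
  have graphG: "(i, \<alpha> i) \<in> ?G" if "i \<in> F" for i
    using that unfolding fct_def graph_def by auto
  let ?cf = "coef ?N ?G \<Lambda>"
  define A where "A = (\<lambda>r c. if r < n \<and> c < ?N then \<Sum>i\<in>F. ?cf (\<lambda>r. if r = c then 1 else 0) (i, \<alpha> i) * \<mu> i r else 0)"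
  have key: "matapp ?N A y = (\<lambda>r. \<Sum>i\<in>F. ?cf y (i, \<alpha> i) * \<mu> i r)" if "y \<in> vecs ?N" for y
    unfolding A_def by (rule coefmat[OF GB fF \<mu>v that])
  have cf_graph: "?cf (\<lambda>r. \<Sum>i\<in>F. d i * \<Lambda> (i, \<alpha> i) r) (j, \<alpha> j) = d j" if "j \<in> F" for d j
  proof -
    have "?cf (\<lambda>r. \<Sum>i\<in>F. d i * \<Lambda> (i, \<alpha> i) r) = (\<lambda>h. \<Sum>i\<in>F. d i * (if h = (i, \<alpha> i) then 1 else 0))"
      by (rule coef_lc[OF GB fF]) (use graphG in auto)
    moreover have "(\<lambda>i. d i * (if (j, \<alpha> j) = (i, \<alpha> i) then 1 else 0)) = (\<lambda>i. if j = i then d i else 0)"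
      by (auto intro!: ext)
    ultimately show ?thesis using that fF by (simp only: sum.delta) simp
  qed
  have "A \<in> lin_maps ?N n" unfolding A_def lin_maps_def by auto
  moreover have "matapp ?N A ` vecs ?N = vecs n"
  proof
    show "matapp ?N A ` vecs ?N \<subseteq> vecs n"
      unfolding A_def matapp_def vecs_def by auto
    show "vecs n \<subseteq> matapp ?N A ` vecs ?N"
    proof
      fix w :: "nat \<Rightarrow> 'r" assume w: "w \<in> vecs n"
      then obtain d where d: "\<forall>a. a \<notin> F \<longrightarrow> d a = 0" "w = lincomb F d \<mu>"
        using \<mu>B unfolding is_basis_def by blast
      let ?y = "\<lambda>r. \<Sum>i\<in>F. d i * \<Lambda> (i, \<alpha> i) r"
      have yv: "?y \<in> vecs ?N" by (rule vecs_sum) (use \<Lambda>v graphv Fs in auto)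
      have "matapp ?N A ?y = w" unfolding key[OF yv] d(2) lincomb_def
        by (rule ext, rule sum.cong) (auto simp: cf_graph)
      then show "w \<in> matapp ?N A ` vecs ?N" using yv by blast
    qed
  qed
  moreover have "{x \<in> vecs ?N. matapp ?N A x = (\<lambda>r. 0)} = rspan ?\<sigma> \<Lambda>"
  proof
    show "rspan ?\<sigma> \<Lambda> \<subseteq> {x \<in> vecs ?N. matapp ?N A x = (\<lambda>r. 0)}"
    proof
      fix y assume y: "y \<in> rspan ?\<sigma> \<Lambda>"
      have yv: "y \<in> vecs ?N" using rspan_vecs[OF _ y] \<Lambda>v sigma_sub by blast
      obtain c where c: "y = (\<lambda>r. \<Sum>s\<in>?\<sigma>. c s * \<Lambda> s r)" using y unfolding rspan_def lincomb_def by blast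
      have "?cf y = (\<lambda>h. \<Sum>s\<in>?\<sigma>. c s * (if h = s then 1 else 0))"
        unfolding c by (rule coef_lc[OF GB finite_sigma]) (auto simp: fct_def)
      then have "?cf y (i, \<alpha> i) = 0" for i
        using graph_notin_sigma[of i \<alpha> m J] by (auto intro!: sum.neutral)
      then show "y \<in> {x \<in> vecs ?N. matapp ?N A x = (\<lambda>r. 0)}" using key[OF yv] yv by simp
    qed
    show "{x \<in> vecs ?N. matapp ?N A x = (\<lambda>r. 0)} \<subseteq> rspan ?\<sigma> \<Lambda>"
    proof
      fix y assume "y \<in> {x \<in> vecs ?N. matapp ?N A x = (\<lambda>r. 0)}"
      then have yv: "y \<in> vecs ?N" and y0: "(\<lambda>r. \<Sum>i\<in>F. ?cf y (i, \<alpha> i) * \<mu> i r) = (\<lambda>r. 0)"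
        using key by auto
      have z: "?cf y (i, \<alpha> i) = 0" if "i \<in> F" for i
        using basis_indep[OF \<mu>B, of "\<lambda>i. if i \<in> F then ?cf y (i, \<alpha> i) else 0" i] y0 that
        unfolding lincomb_def by (simp cong: sum.cong)
      have "y = (\<lambda>r. \<Sum>g\<in>?G. ?cf y g * \<Lambda> g r)" using coef_repr[OF GB yv] .
      also have "\<dots> = (\<lambda>r. \<Sum>g\<in>?\<sigma>. ?cf y g * \<Lambda> g r)"
      proof (rule ext)
        fix r
        have "(\<Sum>g\<in>?G. ?cf y g * \<Lambda> g r) = (\<Sum>g\<in>?\<sigma>. ?cf y g * \<Lambda> g r) + (\<Sum>g\<in>graph \<alpha> F. ?cf y g * \<Lambda> g r)"
          unfolding fct_def by (rule sum.union_disjoint) (use finite_sigma fF graph_disj[OF Fs] in \<open>auto simp: graph_def\<close>)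
        moreover have "(\<Sum>g\<in>graph \<alpha> F. ?cf y g * \<Lambda> g r) = 0"
          unfolding graph_def using z by (auto intro!: sum.neutral)
        ultimately show "(\<Sum>g\<in>?G. ?cf y g * \<Lambda> g r) = (\<Sum>g\<in>?\<sigma>. ?cf y g * \<Lambda> g r)" by simp
      qed
      finally show "y \<in> rspan ?\<sigma> \<Lambda>" unfolding rspan_def lincomb_def by blast
    qed
  qed
  moreover have "\<forall>i\<in>{1..m}. \<mu> i = matapp ?N A (\<Lambda> (i, \<alpha> i))"
  proof
    fix i assume i: "i \<in> {1..m}"
    have yv: "\<Lambda> (i, \<alpha> i) \<in> vecs ?N" using \<Lambda>v graphv[OF i] by blast
    show "\<mu> i = matapp ?N A (\<Lambda> (i, \<alpha> i))"
    proof (cases "i \<in> F")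
      case True
      have "?cf (\<Lambda> (i, \<alpha> i)) = (\<lambda>h. if h = (i, \<alpha> i) then 1 else 0)"
        using coef_gen[OF GB graphG[OF True]] .
      then have "matapp ?N A (\<Lambda> (i, \<alpha> i)) = (\<lambda>r. \<Sum>j\<in>F. (if (j, \<alpha> j) = (i, \<alpha> i) then 1 else 0) * \<mu> j r)"
        using key[OF yv] by simp
      also have "\<dots> = \<mu> i"
      proof -
        have "(\<lambda>j. (if (j, \<alpha> j) = (i, \<alpha> i) then 1 else 0) * \<mu> j r) = (\<lambda>j. if j = i then \<mu> j r else 0)" for r
          by (auto intro!: ext)
        then show ?thesis using True fF by (simp only: sum.delta') simp
      qed
      finally show ?thesis by simp
    next
      case False
      let ?d = "?cf (\<Lambda> (i, \<alpha> i))"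
      have rep: "\<Lambda> (i, \<alpha> i) r = (\<Sum>g\<in>?\<sigma>. ?d g * \<Lambda> g r) + (\<Sum>j\<in>F. ?d (j, \<alpha> j) * \<Lambda> (j, \<alpha> j) r)" for r
      proof -
        have "\<Lambda> (i, \<alpha> i) r = (\<Sum>g\<in>?G. ?d g * \<Lambda> g r)" using fun_cong[OF coef_repr[OF GB yv], of r] .
        also have "\<dots> = (\<Sum>g\<in>?\<sigma>. ?d g * \<Lambda> g r) + (\<Sum>g\<in>graph \<alpha> F. ?d g * \<Lambda> g r)"
          unfolding fct_def by (rule sum.union_disjoint) (use finite_sigma fF graph_disj[OF Fs] in \<open>auto simp: graph_def\<close>)
        also have "(\<Sum>g\<in>graph \<alpha> F. ?d g * \<Lambda> g r) = (\<Sum>j\<in>F. ?d (j, \<alpha> j) * \<Lambda> (j, \<alpha> j) r)"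
          unfolding graph_def by (subst sum.reindex) (auto simp: inj_on_def)
        finally show ?thesis .
      qed
      define x where "x = (\<lambda>t. (if t = i then 1 else 0) - (if t \<in> F then ?d (t, \<alpha> t) else 0))"
      have xs: "supp m x" unfolding supp_def x_def using i Fs by auto
      have "(\<lambda>r. \<Sum>t=1..m. x t * \<Lambda> (t, \<alpha> t) r) = (\<lambda>r. \<Sum>g\<in>?\<sigma>. ?d g * \<Lambda> g r)"
      proof (rule ext)
        fix r
        have "(\<Sum>t=1..m. x t * \<Lambda> (t, \<alpha> t) r) = \<Lambda> (i, \<alpha> i) r - (\<Sum>t\<in>F. ?d (t, \<alpha> t) * \<Lambda> (t, \<alpha> t) r)"
          unfolding x_def by (rule sum_delta_minus) (use i Fs in auto)
        then show "(\<Sum>t=1..m. x t * \<Lambda> (t, \<alpha> t) r) = (\<Sum>g\<in>?\<sigma>. ?d g * \<Lambda> g r)" using rep[of r] by simp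
      qed
      then have "x \<in> KerRel m J \<Lambda> \<alpha>" unfolding KerRel_def rspan_def lincomb_def using xs by auto
      then have "x \<in> kerv m \<mu>" using eq by simp
      then have x0: "(\<Sum>t=1..m. x t * \<mu> t r) = 0" for r unfolding kerv_def by (auto dest: fun_cong)
      have "(\<Sum>t=1..m. x t * \<mu> t r) = \<mu> i r - (\<Sum>t\<in>F. ?d (t, \<alpha> t) * \<mu> t r)" for r
        unfolding x_def by (rule sum_delta_minus) (use i Fs in auto)
      then have "\<mu> i r = (\<Sum>t\<in>F. ?d (t, \<alpha> t) * \<mu> t r)" for r using x0[of r] by simp
      then show ?thesis using key[OF yv] by auto
    qed
  qed
  ultimately show ?thesis unfolding proj_rep_def by blast
qed




section \<open>Relations\<close>

definition Dset :: "nat \<Rightarrow> (nat \<Rightarrow> nat) \<Rightarrow> (nat \<Rightarrow> nat) \<Rightarrow> nat set" where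
  "Dset m \<beta> \<alpha> = {i\<in>{1..m}. \<alpha> i \<noteq> \<beta> i}"

definition Rel :: "nat \<Rightarrow> (nat \<Rightarrow> nat \<Rightarrow> 'r::comm_ring_1) \<Rightarrow> nat set \<Rightarrow> (nat \<Rightarrow> nat \<Rightarrow> 'r) \<Rightarrow> (nat \<Rightarrow> 'r) set" where
  "Rel m P D f = {x. supp m x \<and> (\<exists>z\<in>kerv m P. (\<forall>i\<in>{1..m}-D. x i = z i) \<and>
       (\<forall>j\<in>D. x j = - (\<Sum>i=1..m. f j i * z i)))}"

definition Inj :: "nat \<Rightarrow> (nat \<Rightarrow> nat \<Rightarrow> 'r::comm_ring_1) \<Rightarrow> nat set \<Rightarrow> (nat \<Rightarrow> nat \<Rightarrow> 'r) \<Rightarrow> bool" where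
  "Inj m P D f \<longleftrightarrow> (\<forall>z\<in>kerv m P. (\<forall>i\<in>{1..m}-D. z i = 0) \<and> (\<forall>j\<in>D. (\<Sum>i=1..m. f j i * z i) = 0) \<longrightarrow> (\<forall>i. z i = 0))"

definition Good :: "nat \<Rightarrow> (nat \<Rightarrow> nat) \<Rightarrow> ((nat \<Rightarrow> nat) \<Rightarrow> nat \<Rightarrow> nat \<Rightarrow> 'r::comm_ring_1) \<Rightarrow> (nat \<Rightarrow> nat)
    \<Rightarrow> (nat \<Rightarrow> nat \<Rightarrow> nat \<Rightarrow> 'r) \<Rightarrow> bool" where
  "Good m J q \<beta> cfun \<longleftrightarrow> (\<forall>\<alpha>\<in>I_J m J.
     kerv m (q \<alpha>) = Rel m (q \<beta>) (Dset m \<beta> \<alpha>) (\<lambda>j. cfun j (\<alpha> j)) \<and>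
     Inj m (q \<beta>) (Dset m \<beta> \<alpha>) (\<lambda>j. cfun j (\<alpha> j)))"

lemma Dset_sub: "Dset m \<beta> \<alpha> \<subseteq> {1..m}" unfolding Dset_def by auto

lemma sum_graph: "(\<Sum>v\<in>graph \<alpha> D. h v) = (\<Sum>i\<in>D. h (i, \<alpha> i))"
  unfolding graph_def by (subst sum.reindex) (auto simp: inj_on_def)

lemma coef_diff:
  assumes B: "is_basis N G b" and y: "y1 \<in> vecs N" "y2 \<in> vecs N"
  shows "coef N G b (\<lambda>r. y1 r - y2 r) = (\<lambda>g. coef N G b y1 g - coef N G b y2 g)"
  using coef_sum[OF B, of "{0::nat,1}" "\<lambda>t. if t = 0 then y1 else y2" "\<lambda>t. if t = 0 then 1 else -1"] y
  by simp

lemma V1: "\<alpha> \<in> I_J m J \<Longrightarrow> \<beta> \<in> I_J m J \<Longrightarrow> graph \<alpha> (Dset m \<beta> \<alpha>) \<subseteq> sigma_face m J \<beta>"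
  unfolding graph_def Dset_def using sigma_face_iff I_J_mem by fastforce

lemma V2: "\<alpha> \<in> I_J m J \<Longrightarrow> \<beta> \<in> I_J m J \<Longrightarrow> graph \<beta> (Dset m \<beta> \<alpha>) \<subseteq> sigma_face m J \<alpha>"
  unfolding graph_def Dset_def using sigma_face_iff I_J_mem by fastforce

lemma V3: "\<alpha> \<in> I_J m J \<Longrightarrow> \<beta> \<in> I_J m J \<Longrightarrow>
  sigma_face m J \<alpha> - graph \<beta> (Dset m \<beta> \<alpha>) = sigma_face m J \<beta> - graph \<alpha> (Dset m \<beta> \<alpha>)"
  unfolding graph_def Dset_def sigma_face_def KJ_verts_def by auto

lemma finite_Dset: "finite (Dset m \<beta> \<alpha>)"
  using finite_subset[OF Dset_sub] by blast


lemma sum_split: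
  assumes "finite S" "D \<subseteq> S"
  shows "(\<Sum>i\<in>S. g i) = (\<Sum>i\<in>D. g i) + (\<Sum>i\<in>S - D. g i :: 'r::comm_ring_1)"
  using sum.subset_diff[OF assms(2,1)] by (simp add: add.commute)




lemma lin7: fixes w :: "'r::comm_ring_1"
  assumes "w = a + b" "a = - c" "b = b'" "X = d + b'" "X = Y" "Y = e + f" "e = c" shows "w = f - d"
proof -
  have "w = - c + b'" using assms(1,2,3) by simp
  moreover have "b' = Y - d" using assms(4,5) by (simp add: algebra_simps)
  ultimately show ?thesis using assms(6,7) by (simp add: algebra_simps)
qed

lemma lin5: fixes X :: "'r::comm_ring_1"
  assumes "X = xd + xo" "xo = zo" "w = zd + zo" "w = g + rest" "g = - xd" shows "X = rest - zd"
proof -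
  have "zo = w - zd" using assms(3) by (simp add: algebra_simps)
  then have "X = xd + (g + rest) - zd" using assms(1,2,4) by (simp add: algebra_simps)
  then show ?thesis using assms(5) by (simp add: algebra_simps)
qed

lemma span_repr:
  assumes B: "is_basis N G b" and sub: "S \<subseteq> G" and y: "y \<in> rspan S b"
  shows "y = (\<lambda>r. \<Sum>v\<in>S. coef N G b y v * b v r)" and "\<forall>v. v \<notin> S \<longrightarrow> coef N G b y v = 0"
proof -
  have fG: "finite G" using basis_fin[OF B] .
  have fS: "finite S" using finite_subset[OF sub fG] .
  obtain c where c: "y = lincomb S c b" using y unfolding rspan_def by blast
  have ce: "coef N G b y = (\<lambda>h. if h \<in> S then c h else 0)"
  proof (rule coef_eq[OF B])
    show "\<forall>a. a \<notin> G \<longrightarrow> (if a \<in> S then c a else 0) = 0" using sub by auto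
    show "y = lincomb G (\<lambda>h. if h \<in> S then c h else 0) b"
      unfolding c lincomb_def by (rule ext) (simp add: sum_if_sub[OF fG sub] if_distrib[of "\<lambda>x. x * _"] cong: if_cong)
  qed
  show "y = (\<lambda>r. \<Sum>v\<in>S. coef N G b y v * b v r)" unfolding ce using c unfolding lincomb_def by simp
  show "\<forall>v. v \<notin> S \<longrightarrow> coef N G b y v = 0" unfolding ce by simp
qed

lemma extraction:
  fixes \<Lambda> :: "nat \<times> nat \<Rightarrow> nat \<Rightarrow> 'r::comm_ring_1" and q :: "(nat \<Rightarrow> nat) \<Rightarrow> nat \<Rightarrow> nat \<Rightarrow> 'r"
  assumes gK: "goodK K m n" and J1: "\<forall>i\<in>{1..m}. 1 \<le> J i"
    and cm: "char_map (KJ K m J) (KJ_verts m J) (dimJ m n J) \<Lambda>"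
    and \<beta>: "\<beta> \<in> I_J m J" and rel: "\<forall>\<alpha>\<in>I_J m J. kerv m (q \<alpha>) = KerRel m J \<Lambda> \<alpha>"
  shows "\<exists>cfun. Good m J q \<beta> cfun"
proof -
  let ?N = "dimJ m n J"
  obtain F where F: "F \<in> K" "card F = n" using goodK_facet[OF gK goodK_empty[OF gK]] by blast
  let ?G = "fct m J \<beta> F"
  let ?\<sigma>\<beta> = "sigma_face m J \<beta>"
  have GB: "is_basis ?N ?G \<Lambda>" using fct_basis[OF gK J1 cm \<beta> F] .
  have \<sigma>G: "?\<sigma>\<beta> \<subseteq> ?G" unfolding fct_def by auto
  have \<Lambda>v: "\<forall>v\<in>KJ_verts m J. \<Lambda> v \<in> vecs ?N" using cm unfolding char_map_def by blast
  have gv: "\<And>\<gamma> i. \<gamma> \<in> I_J m J \<Longrightarrow> i \<in> {1..m} \<Longrightarrow> \<Lambda> (i, \<gamma> i) \<in> vecs ?N"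
    using \<Lambda>v I_J_mem verts_iff by blast
  have sv: "\<And>\<gamma> v. v \<in> sigma_face m J \<gamma> \<Longrightarrow> \<Lambda> v \<in> vecs ?N" using \<Lambda>v sigma_sub by blast
  let ?cf = "coef ?N ?G \<Lambda>"
  define cfun where "cfun = (\<lambda>j k i. ?cf (\<Lambda> (i, \<beta> i)) (j, k))"
  define w where "w = (\<lambda>z r. \<Sum>i=1..m. z i * \<Lambda> (i, \<beta> i) r)"
  have wv: "w z \<in> vecs ?N" for z unfolding w_def by (rule vecs_sum) (use gv[OF \<beta>] in auto)
  have cfw: "?cf (w z) = (\<lambda>g. \<Sum>i=1..m. z i * ?cf (\<Lambda> (i, \<beta> i)) g)" for z
    unfolding w_def by (rule coef_sum[OF GB]) (use gv[OF \<beta>] in auto)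
  have cfw2: "?cf (w z) (j, k) = (\<Sum>i=1..m. cfun j k i * z i)" for z j k
    unfolding cfw cfun_def by (simp add: mult.commute)
  have kerP: "kerv m (q \<beta>) = KerRel m J \<Lambda> \<beta>" using rel \<beta> by blast
  have Kz: "w z \<in> rspan ?\<sigma>\<beta> \<Lambda>" if "z \<in> kerv m (q \<beta>)" for z
    using that kerP unfolding KerRel_def w_def by blast
  have Kz2: "z \<in> kerv m (q \<beta>)" if "supp m z" "w z \<in> rspan ?\<sigma>\<beta> \<Lambda>" for z
    using that kerP unfolding KerRel_def w_def by blast
  have wrep: "w z = (\<lambda>r. \<Sum>v\<in>?\<sigma>\<beta>. ?cf (w z) v * \<Lambda> v r)" if "z \<in> kerv m (q \<beta>)" for z
    using span_repr(1)[OF GB \<sigma>G Kz[OF that]] .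
  show ?thesis
  proof (rule exI[of _ cfun], unfold Good_def, intro ballI conjI)
    fix \<alpha> assume \<alpha>: "\<alpha> \<in> I_J m J"
    let ?D = "Dset m \<beta> \<alpha>"
    let ?\<sigma>\<alpha> = "sigma_face m J \<alpha>"
    let ?f = "\<lambda>j. cfun j (\<alpha> j)"
    have fD: "finite ?D" using finite_Dset .
    have Ds: "?D \<subseteq> {1..m}" using Dset_sub .
    have off: "\<alpha> i = \<beta> i" if "i \<in> {1..m} - ?D" for i using that unfolding Dset_def by auto
    have V1': "graph \<alpha> ?D \<subseteq> ?\<sigma>\<beta>" using V1[OF \<alpha> \<beta>] .
    have V2': "graph \<beta> ?D \<subseteq> ?\<sigma>\<alpha>" using V2[OF \<alpha> \<beta>] .
    have V3': "?\<sigma>\<alpha> - graph \<beta> ?D = ?\<sigma>\<beta> - graph \<alpha> ?D" using V3[OF \<alpha> \<beta>] .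
    have fsa: "finite ?\<sigma>\<alpha>" "finite ?\<sigma>\<beta>" using finite_sigma by auto
    have "KerRel m J \<Lambda> \<alpha> = Rel m (q \<beta>) ?D ?f"
    proof
      show "KerRel m J \<Lambda> \<alpha> \<subseteq> Rel m (q \<beta>) ?D ?f"
      proof
        fix x assume x: "x \<in> KerRel m J \<Lambda> \<alpha>"
        then have xs: "supp m x" unfolding KerRel_def by blast
        obtain y where y: "(\<lambda>r. \<Sum>i=1..m. x i * \<Lambda> (i, \<alpha> i) r) = (\<lambda>r. \<Sum>s\<in>?\<sigma>\<alpha>. y s * \<Lambda> s r)"
          using x unfolding KerRel_def rspan_def lincomb_def by blast
        define z where "z = (\<lambda>i. if i \<in> ?D then - y (i, \<beta> i) else x i)"
        have zs: "supp m z" using xs Ds unfolding z_def supp_def by auto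
        have wz: "w z = (\<lambda>r. (\<Sum>s\<in>?\<sigma>\<alpha> - graph \<beta> ?D. y s * \<Lambda> s r) - (\<Sum>i\<in>?D. x i * \<Lambda> (i, \<alpha> i) r))"
        proof (rule ext)
          fix r
          have a: "w z r = (\<Sum>i\<in>?D. z i * \<Lambda> (i, \<beta> i) r) + (\<Sum>i\<in>{1..m}-?D. z i * \<Lambda> (i, \<beta> i) r)"
            unfolding w_def by (rule sum_split) (use Ds in auto)
          have b: "(\<Sum>i\<in>{1..m}-?D. z i * \<Lambda> (i, \<beta> i) r) = (\<Sum>i\<in>{1..m}-?D. x i * \<Lambda> (i, \<alpha> i) r)"
            by (rule sum.cong) (auto simp: z_def off)
          have c: "(\<Sum>i=1..m. x i * \<Lambda> (i, \<alpha> i) r) = (\<Sum>i\<in>?D. x i * \<Lambda> (i, \<alpha> i) r) + (\<Sum>i\<in>{1..m}-?D. x i * \<Lambda> (i, \<alpha> i) r)"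
            by (rule sum_split) (use Ds in auto)
          have d: "(\<Sum>s\<in>?\<sigma>\<alpha>. y s * \<Lambda> s r) = (\<Sum>s\<in>graph \<beta> ?D. y s * \<Lambda> s r) + (\<Sum>s\<in>?\<sigma>\<alpha> - graph \<beta> ?D. y s * \<Lambda> s r)"
            by (rule sum_split) (use fsa V2' in auto)
          have e: "(\<Sum>s\<in>graph \<beta> ?D. y s * \<Lambda> s r) = (\<Sum>i\<in>?D. y (i, \<beta> i) * \<Lambda> (i, \<beta> i) r)"
            by (rule sum_graph)
          have f: "(\<Sum>i\<in>?D. z i * \<Lambda> (i, \<beta> i) r) = - (\<Sum>i\<in>?D. y (i, \<beta> i) * \<Lambda> (i, \<beta> i) r)"
            by (simp add: z_def sum_negf[symmetric])
          show "w z r = (\<Sum>s\<in>?\<sigma>\<alpha> - graph \<beta> ?D. y s * \<Lambda> s r) - (\<Sum>i\<in>?D. x i * \<Lambda> (i, \<alpha> i) r)"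
          proof -
            have y': "(\<Sum>i=1..m. x i * \<Lambda> (i, \<alpha> i) r) = (\<Sum>s\<in>?\<sigma>\<alpha>. y s * \<Lambda> s r)"
              using fun_cong[OF y, of r] by simp
            show ?thesis by (rule lin7[OF a f b c y' d e])
          qed
        qed
        have s1: "?\<sigma>\<alpha> - graph \<beta> ?D \<subseteq> ?\<sigma>\<beta>" using V3' by auto
        have r1: "(\<lambda>r. \<Sum>s\<in>?\<sigma>\<alpha> - graph \<beta> ?D. y s * \<Lambda> s r) \<in> rspan ?\<sigma>\<beta> \<Lambda>"
          using rspan_lc[where B = "?\<sigma>\<beta>" and I = "?\<sigma>\<alpha> - graph \<beta> ?D" and g = id and a = y and b = \<Lambda>] fsa s1 by auto
        have r2: "(\<lambda>r. \<Sum>i\<in>?D. x i * \<Lambda> (i, \<alpha> i) r) \<in> rspan ?\<sigma>\<beta> \<Lambda>"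
          using rspan_lc[where B = "?\<sigma>\<beta>" and I = "?D" and g = "\<lambda>i. (i, \<alpha> i)" and a = x and b = \<Lambda>] fsa fD V1'
          unfolding graph_def by auto
        have "w z \<in> rspan ?\<sigma>\<beta> \<Lambda>" unfolding wz by (rule rspan_diff[OF r1 r2])
        then have zk: "z \<in> kerv m (q \<beta>)" using Kz2[OF zs] by blast
        have t1: "(\<lambda>r. \<Sum>s\<in>?\<sigma>\<alpha> - graph \<beta> ?D. y s * \<Lambda> s r) \<in> vecs ?N"
          by (rule vecs_sum) (use sv in blast)
        have t2: "(\<lambda>r. \<Sum>i\<in>?D. x i * \<Lambda> (i, \<alpha> i) r) \<in> vecs ?N"
          by (rule vecs_sum) (use gv[OF \<alpha>] Ds in blast)
        have "?cf (w z) (j, \<alpha> j) = - x j" if j: "j \<in> ?D" for j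
        proof -
          have c1: "?cf (\<lambda>r. \<Sum>s\<in>?\<sigma>\<alpha> - graph \<beta> ?D. y s * \<Lambda> s r) = (\<lambda>h. \<Sum>s\<in>?\<sigma>\<alpha> - graph \<beta> ?D. y s * (if h = id s then 1 else 0))"
            using coef_lc[OF GB, of "?\<sigma>\<alpha> - graph \<beta> ?D" id y] s1 \<sigma>G fsa by auto
          have c2: "?cf (\<lambda>r. \<Sum>i\<in>?D. x i * \<Lambda> (i, \<alpha> i) r) = (\<lambda>h. \<Sum>i\<in>?D. x i * (if h = (i, \<alpha> i) then 1 else 0))"
            by (rule coef_lc[OF GB fD]) (use V1' \<sigma>G in \<open>auto simp: graph_def\<close>)
          have e1: "(\<Sum>s\<in>?\<sigma>\<alpha> - graph \<beta> ?D. y s * (if (j, \<alpha> j) = id s then 1 else 0)) = 0"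
            using graph_notin_sigma[of j \<alpha> m J] by (auto intro!: sum.neutral)
          have e2: "(\<Sum>i\<in>?D. x i * (if (j, \<alpha> j) = (i, \<alpha> i) then 1 else 0)) = x j"
          proof -
            have "(\<lambda>i. x i * (if (j, \<alpha> j) = (i, \<alpha> i) then 1 else 0)) = (\<lambda>i. if j = i then x i else 0)"
              by (auto intro!: ext)
            then show ?thesis using j fD by (simp only: sum.delta) simp
          qed
          show ?thesis unfolding wz coef_diff[OF GB t1 t2] c1 c2 using e1 e2 by simp
        qed
        then have "\<forall>j\<in>?D. x j = - (\<Sum>i=1..m. ?f j i * z i)" using cfw2 by (metis minus_minus)
        moreover have "\<forall>i\<in>{1..m}-?D. x i = z i" unfolding z_def by auto
        ultimately show "x \<in> Rel m (q \<beta>) ?D ?f" unfolding Rel_def using xs zk by blast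
      qed
      show "Rel m (q \<beta>) ?D ?f \<subseteq> KerRel m J \<Lambda> \<alpha>"
      proof
        fix x assume "x \<in> Rel m (q \<beta>) ?D ?f"
        then obtain z where xs: "supp m x" and zk: "z \<in> kerv m (q \<beta>)"
          and xo: "\<forall>i\<in>{1..m}-?D. x i = z i" and xd: "\<forall>j\<in>?D. x j = - (\<Sum>i=1..m. ?f j i * z i)"
          unfolding Rel_def by blast
        have xd': "x j = - ?cf (w z) (j, \<alpha> j)" if "j \<in> ?D" for j using xd that cfw2 by simp
        have zs: "supp m z" using zk unfolding kerv_def by blast
        have eq: "(\<Sum>i=1..m. x i * \<Lambda> (i, \<alpha> i) r) =
           (\<Sum>v\<in>?\<sigma>\<beta> - graph \<alpha> ?D. ?cf (w z) v * \<Lambda> v r) - (\<Sum>i\<in>?D. z i * \<Lambda> (i, \<beta> i) r)" for r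
        proof -
          have a: "(\<Sum>i=1..m. x i * \<Lambda> (i, \<alpha> i) r) = (\<Sum>i\<in>?D. x i * \<Lambda> (i, \<alpha> i) r) + (\<Sum>i\<in>{1..m}-?D. x i * \<Lambda> (i, \<alpha> i) r)"
            by (rule sum_split) (use Ds in auto)
          have b: "(\<Sum>i\<in>{1..m}-?D. x i * \<Lambda> (i, \<alpha> i) r) = (\<Sum>i\<in>{1..m}-?D. z i * \<Lambda> (i, \<beta> i) r)"
            by (rule sum.cong) (auto simp: xo off)
          have c: "w z r = (\<Sum>i\<in>?D. z i * \<Lambda> (i, \<beta> i) r) + (\<Sum>i\<in>{1..m}-?D. z i * \<Lambda> (i, \<beta> i) r)"
            unfolding w_def by (rule sum_split) (use Ds in auto)
          have d: "w z r = (\<Sum>v\<in>graph \<alpha> ?D. ?cf (w z) v * \<Lambda> v r) + (\<Sum>v\<in>?\<sigma>\<beta> - graph \<alpha> ?D. ?cf (w z) v * \<Lambda> v r)"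
            using fun_cong[OF wrep[OF zk], of r] sum_split[OF fsa(2) V1'] by simp
          have e: "(\<Sum>v\<in>graph \<alpha> ?D. ?cf (w z) v * \<Lambda> v r) = - (\<Sum>i\<in>?D. x i * \<Lambda> (i, \<alpha> i) r)"
            unfolding sum_graph by (simp add: xd' sum_negf[symmetric])
          show ?thesis by (rule lin5[OF a b c d e])
        qed
        have s1: "?\<sigma>\<beta> - graph \<alpha> ?D \<subseteq> ?\<sigma>\<alpha>" using V3' by auto
        have r1: "(\<lambda>r. \<Sum>v\<in>?\<sigma>\<beta> - graph \<alpha> ?D. ?cf (w z) v * \<Lambda> v r) \<in> rspan ?\<sigma>\<alpha> \<Lambda>"
          using rspan_lc[where B = "?\<sigma>\<alpha>" and I = "?\<sigma>\<beta> - graph \<alpha> ?D" and g = id and a = "?cf (w z)" and b = \<Lambda>] fsa s1 by auto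
        have r2: "(\<lambda>r. \<Sum>i\<in>?D. z i * \<Lambda> (i, \<beta> i) r) \<in> rspan ?\<sigma>\<alpha> \<Lambda>"
          using rspan_lc[where B = "?\<sigma>\<alpha>" and I = "?D" and g = "\<lambda>i. (i, \<beta> i)" and a = z and b = \<Lambda>] fsa fD V2'
          unfolding graph_def by auto
        have "(\<lambda>r. (\<Sum>v\<in>?\<sigma>\<beta> - graph \<alpha> ?D. ?cf (w z) v * \<Lambda> v r) - (\<Sum>i\<in>?D. z i * \<Lambda> (i, \<beta> i) r)) \<in> rspan ?\<sigma>\<alpha> \<Lambda>"
          by (rule rspan_diff[OF r1 r2])
        then show "x \<in> KerRel m J \<Lambda> \<alpha>" unfolding KerRel_def using xs eq by simp
      qed
    qed
    then show "kerv m (q \<alpha>) = Rel m (q \<beta>) ?D ?f" using rel \<alpha> by simp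
    show "Inj m (q \<beta>) ?D ?f"
      unfolding Inj_def
    proof (intro ballI impI)
      fix z assume zk: "z \<in> kerv m (q \<beta>)"
        and h: "(\<forall>i\<in>{1..m}-?D. z i = 0) \<and> (\<forall>j\<in>?D. (\<Sum>i=1..m. ?f j i * z i) = 0)"
      have zs: "supp m z" using zk unfolding kerv_def by blast
      have c0: "?cf (w z) (j, \<alpha> j) = 0" if "j \<in> ?D" for j using h that cfw2 by simp
      have w1: "w z r = (\<Sum>i\<in>?D. z i * \<Lambda> (i, \<beta> i) r)" for r
      proof -
        have "w z r = (\<Sum>i\<in>?D. z i * \<Lambda> (i, \<beta> i) r) + (\<Sum>i\<in>{1..m}-?D. z i * \<Lambda> (i, \<beta> i) r)"
          unfolding w_def by (rule sum_split) (use Ds in auto)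
        then show ?thesis using h by simp
      qed
      have w2: "w z r = (\<Sum>v\<in>?\<sigma>\<beta> - graph \<alpha> ?D. ?cf (w z) v * \<Lambda> v r)" for r
      proof -
        have "w z r = (\<Sum>v\<in>graph \<alpha> ?D. ?cf (w z) v * \<Lambda> v r) + (\<Sum>v\<in>?\<sigma>\<beta> - graph \<alpha> ?D. ?cf (w z) v * \<Lambda> v r)"
          using fun_cong[OF wrep[OF zk], of r] sum_split[OF fsa(2) V1'] by simp
        moreover have "(\<Sum>v\<in>graph \<alpha> ?D. ?cf (w z) v * \<Lambda> v r) = 0"
          unfolding sum_graph using c0 by simp
        ultimately show ?thesis by simp
      qed
      let ?Ga = "fct m J \<alpha> F"
      have GaB: "is_basis ?N ?Ga \<Lambda>" using fct_basis[OF gK J1 cm \<alpha> F] .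
      have \<sigma>aG: "?\<sigma>\<alpha> \<subseteq> ?Ga" unfolding fct_def by auto
      let ?cfa = "coef ?N ?Ga \<Lambda>"
      have d1: "?cfa (w z) = (\<lambda>h. \<Sum>i\<in>?D. z i * (if h = (i, \<beta> i) then 1 else 0))"
      proof -
        have "w z = (\<lambda>r. \<Sum>i\<in>?D. z i * \<Lambda> (i, \<beta> i) r)" using w1 by auto
        then show ?thesis using coef_lc[OF GaB fD, of "\<lambda>i. (i, \<beta> i)" z] V2' \<sigma>aG
          unfolding graph_def by auto
      qed
      have d2: "?cfa (w z) = (\<lambda>h. \<Sum>v\<in>?\<sigma>\<beta> - graph \<alpha> ?D. ?cf (w z) v * (if h = id v then 1 else 0))"
      proof -
        have wz2: "w z = (\<lambda>r. \<Sum>v\<in>?\<sigma>\<beta> - graph \<alpha> ?D. ?cf (w z) v * \<Lambda> (id v) r)" using w2 by auto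
        have s1: "?\<sigma>\<beta> - graph \<alpha> ?D \<subseteq> ?Ga" using V3' \<sigma>aG by auto
        show ?thesis using coef_lc[OF GaB, of "?\<sigma>\<beta> - graph \<alpha> ?D" id "?cf (w z)"] s1 fsa wz2 by auto
      qed
      show "\<forall>i. z i = 0"
      proof
        fix i
        show "z i = 0"
        proof (cases "i \<in> ?D")
          case True
          have "?cfa (w z) (i, \<beta> i) = z i"
          proof -
            have "(\<lambda>i'. z i' * (if (i, \<beta> i) = (i', \<beta> i') then 1 else 0)) = (\<lambda>i'. if i = i' then z i' else 0)"
              by (auto intro!: ext)
            then show ?thesis unfolding d1 using True fD by (simp only: sum.delta) simp
          qed
          moreover have "?cfa (w z) (i, \<beta> i) = 0"
            unfolding d2 using graph_notin_sigma[of i \<beta> m J] by (auto intro!: sum.neutral)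
          ultimately show ?thesis by simp
        next
          case False
          note nD = False
          show ?thesis
          proof (cases "i \<in> {1..m}")
            case True then show ?thesis using h nD by blast
          next
            case False then show ?thesis using zs unfolding supp_def by blast
          qed
        qed
      qed
    qed
  qed
qed




section \<open>The construction\<close>

locale constr =
  fixes K :: "nat set set" and m n :: nat and J :: "nat \<Rightarrow> nat" and \<beta> :: "nat \<Rightarrow> nat"
    and idx :: "nat \<times> nat \<Rightarrow> nat"
    and q :: "(nat \<Rightarrow> nat) \<Rightarrow> nat \<Rightarrow> nat \<Rightarrow> 'r::comm_ring_1" and cfun :: "nat \<Rightarrow> nat \<Rightarrow> nat \<Rightarrow> 'r"
  assumes gK: "goodK K m n" and J1: "\<forall>i\<in>{1..m}. 1 \<le> J i" and \<beta>: "\<beta> \<in> I_J m J"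
    and chars: "\<forall>\<alpha>\<in>I_J m J. char_map K {1..m} n (q \<alpha>)"
    and idx: "bij_betw idx (sigma_face m J \<beta>) {n..<dimJ m n J}"
begin

abbreviation "NN \<equiv> dimJ m n J"
abbreviation "Sb \<equiv> sigma_face m J \<beta>"
abbreviation "PP \<equiv> q \<beta>"
abbreviation "VV \<equiv> KJ_verts m J"

definition cc :: "nat \<times> nat \<Rightarrow> nat \<Rightarrow> 'r" where "cc u i = cfun (fst u) (snd u) i"
definition ev :: "nat \<times> nat \<Rightarrow> nat \<Rightarrow> 'r" where "ev u = (\<lambda>r. if r = idx u then 1 else 0)"
definition Lam :: "nat \<times> nat \<Rightarrow> nat \<Rightarrow> 'r" where
  "Lam v = (if v \<in> Sb then ev v else (\<lambda>r. PP (fst v) r + (\<Sum>u\<in>Sb. cc u (fst v) * ev u r)))"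
definition sumV :: "(nat \<times> nat \<Rightarrow> 'r) \<Rightarrow> nat \<Rightarrow> 'r" where
  "sumV c = (\<lambda>r. \<Sum>v\<in>VV. c v * Lam v r)"

lemma idx_range: "u \<in> Sb \<Longrightarrow> n \<le> idx u \<and> idx u < NN"
  using idx unfolding bij_betw_def by auto

lemma idx_inj: "u \<in> Sb \<Longrightarrow> u' \<in> Sb \<Longrightarrow> idx u = idx u' \<Longrightarrow> u = u'"
  using idx unfolding bij_betw_def inj_on_def by blast

lemma idx_onto: "n \<le> r \<Longrightarrow> r < NN \<Longrightarrow> \<exists>u\<in>Sb. r = idx u"
  using idx unfolding bij_betw_def by (metis atLeastLessThan_iff imageE)

lemma n_le_N: "n \<le> NN" unfolding dimJ_def by simp

lemma Pv: "i \<in> {1..m} \<Longrightarrow> PP i \<in> vecs n"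
  using chars \<beta> unfolding char_map_def by blast

lemma fSb: "finite Sb" by (rule finite_sigma)

lemma base_in: "i \<in> {1..m} \<Longrightarrow> (i, \<beta> i) \<in> VV"
  using I_J_mem[OF \<beta>] verts_iff by auto

lemma not_Sb: "v \<in> VV \<Longrightarrow> v \<notin> Sb \<Longrightarrow> fst v \<in> {1..m} \<and> v = (fst v, \<beta> (fst v))"
  unfolding sigma_face_def KJ_verts_def by auto

lemma VV_split: "(\<Sum>v\<in>VV. g v) = (\<Sum>u\<in>Sb. g u) + (\<Sum>i=1..m. g (i, \<beta> i) :: 'r)"
proof -
  have eq: "VV = Sb \<union> graph \<beta> {1..m}" using base_in unfolding sigma_face_def graph_def by auto
  have "(\<Sum>v\<in>VV. g v) = (\<Sum>u\<in>Sb. g u) + (\<Sum>v\<in>graph \<beta> {1..m}. g v)"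
    unfolding eq by (rule sum.union_disjoint) (use fSb graph_disj[of "{1..m}" m J \<beta>] in \<open>auto simp: graph_def\<close>)
  then show ?thesis by (simp add: sum_graph)
qed

lemma Lam_Sb: "u \<in> Sb \<Longrightarrow> Lam u = ev u" unfolding Lam_def by simp

lemma Lam_base: "Lam (i, \<beta> i) r = PP i r + (\<Sum>u\<in>Sb. cc u i * ev u r)"
  unfolding Lam_def using graph_notin_sigma[of i \<beta> m J] by simp

lemma ev_low: "u \<in> Sb \<Longrightarrow> r < n \<Longrightarrow> ev u r = 0"
  unfolding ev_def using idx_range by fastforce

lemma ev_high: "u \<in> Sb \<Longrightarrow> NN \<le> r \<Longrightarrow> ev u r = 0"
  unfolding ev_def using idx_range by fastforce

lemma ev_idx: "u \<in> Sb \<Longrightarrow> u0 \<in> Sb \<Longrightarrow> ev u (idx u0) = (if u = u0 then 1 else 0)"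
  unfolding ev_def using idx_inj by auto

lemma sum_Sb_delta: "u0 \<in> Sb \<Longrightarrow> (\<Sum>u\<in>Sb. a u * ev u (idx u0)) = a u0"
proof -
  assume u0: "u0 \<in> Sb"
  have "(\<Sum>u\<in>Sb. a u * ev u (idx u0)) = (\<Sum>u\<in>Sb. if u0 = u then a u else 0)"
    by (rule sum.cong) (auto simp: ev_idx u0)
  then show ?thesis using u0 fSb by simp
qed

lemma Ev1: "r < n \<Longrightarrow> sumV c r = (\<Sum>i=1..m. c (i, \<beta> i) * PP i r)"
proof -
  assume r: "r < n"
  have "sumV c r = (\<Sum>u\<in>Sb. c u * Lam u r) + (\<Sum>i=1..m. c (i, \<beta> i) * Lam (i, \<beta> i) r)"
    unfolding sumV_def by (rule VV_split)
  moreover have "(\<Sum>u\<in>Sb. c u * Lam u r) = 0" using ev_low[OF _ r] Lam_Sb by simp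
  moreover have "Lam (i, \<beta> i) r = PP i r" for i using ev_low[OF _ r] Lam_base by simp
  ultimately show ?thesis by simp
qed

lemma Ev2: "u0 \<in> Sb \<Longrightarrow> sumV c (idx u0) = c u0 + (\<Sum>i=1..m. cc u0 i * c (i, \<beta> i))"
proof -
  assume u0: "u0 \<in> Sb"
  have "sumV c (idx u0) = (\<Sum>u\<in>Sb. c u * Lam u (idx u0)) + (\<Sum>i=1..m. c (i, \<beta> i) * Lam (i, \<beta> i) (idx u0))"
    unfolding sumV_def by (rule VV_split)
  moreover have "(\<Sum>u\<in>Sb. c u * Lam u (idx u0)) = c u0"
    using sum_Sb_delta[OF u0, of c] Lam_Sb by simp
  moreover have "Lam (i, \<beta> i) (idx u0) = cc u0 i" if "i \<in> {1..m}" for i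
  proof -
    have "PP i (idx u0) = 0" using Pv[OF that] idx_range[OF u0] vecsD by blast
    then show ?thesis unfolding Lam_base using sum_Sb_delta[OF u0, of "\<lambda>u. cc u i"] by simp
  qed
  ultimately show ?thesis by (simp add: mult.commute)
qed

lemma Ev3: "NN \<le> r \<Longrightarrow> sumV c r = 0"
proof -
  assume r: "NN \<le> r"
  have "Lam v r = 0" if "v \<in> VV" for v
  proof (cases "v \<in> Sb")
    case True then show ?thesis using ev_high[OF True r] Lam_Sb by simp
  next
    case False
    then have v: "fst v \<in> {1..m}" "v = (fst v, \<beta> (fst v))" using not_Sb that by auto
    have "PP (fst v) r = 0" using Pv[OF v(1)] n_le_N r vecsD by (meson le_trans)
    then show ?thesis using v Lam_base[of "fst v" r] ev_high[OF _ r] by (metis (no_types, lifting) add_0 mult_zero_right sum.neutral)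
  qed
  then show ?thesis unfolding sumV_def by simp
qed

lemma Lam_vecs: "v \<in> VV \<Longrightarrow> Lam v \<in> vecs NN"
proof -
  assume v: "v \<in> VV"
  have e: "sumV (\<lambda>w. if w = v then 1 else 0) = Lam v"
    unfolding sumV_def using v finite_verts by (simp add: if01_mult)
  show ?thesis unfolding vecs_def e[symmetric] using Ev3 by auto
qed

lemma sumV_vecs: "sumV c \<in> vecs NN"
  using Ev3 unfolding vecs_def by auto

lemma agree:
  assumes "y \<in> vecs NN" "y' \<in> vecs NN" "\<forall>r<n. y r = y' r" "\<forall>u\<in>Sb. y (idx u) = y' (idx u)"
  shows "y = y'"
proof
  fix r
  show "y r = y' r"
  proof (cases "r < n")
    case True then show ?thesis using assms by auto
  next
    case False
    show ?thesis
    proof (cases "r < NN")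
      case True
      have "\<exists>u\<in>Sb. r = idx u" using idx_onto[of r] \<open>\<not> r < n\<close> True by simp
      then show ?thesis using assms by auto
    next
      case False then show ?thesis using assms vecsD by (metis not_less)
    qed
  qed
qed

lemma lincomb_sumV:
  assumes "S \<subseteq> VV" "\<forall>v. v \<notin> S \<longrightarrow> c v = 0"
  shows "lincomb S c Lam = sumV c"
  unfolding lincomb_def sumV_def
  by (rule ext, rule sum.mono_neutral_left) (use assms finite_verts in auto)

lemma sumV_diff: "sumV (\<lambda>v. a v - b v) = (\<lambda>r. sumV a r - sumV b r)"
  unfolding sumV_def by (auto simp: left_diff_distrib sum_subtractf)


lemma G_base: "\<alpha> \<in> I_J m J \<Longrightarrow> F \<subseteq> {1..m} \<Longrightarrow> i \<in> {1..m} \<Longrightarrow>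
   ((i, \<beta> i) \<in> fct m J \<alpha> F \<longleftrightarrow> i \<in> Dset m \<beta> \<alpha> \<union> F)"
  using I_J_mem[OF \<beta>] unfolding fct_def graph_def Dset_def sigma_face_def KJ_verts_def by auto

lemma G_Sb: "\<alpha> \<in> I_J m J \<Longrightarrow> F \<subseteq> {1..m} \<Longrightarrow> u \<in> Sb \<Longrightarrow>
   (u \<notin> fct m J \<alpha> F \<longleftrightarrow> (\<exists>j\<in>Dset m \<beta> \<alpha> - F. u = (j, \<alpha> j)))"
  unfolding fct_def graph_def Dset_def sigma_face_def KJ_verts_def by auto

lemma D_Sb: "\<alpha> \<in> I_J m J \<Longrightarrow> j \<in> Dset m \<beta> \<alpha> \<Longrightarrow> (j, \<alpha> j) \<in> Sb"
  using V1[OF _ \<beta>] unfolding graph_def by blast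

lemma G_V: "\<alpha> \<in> I_J m J \<Longrightarrow> F \<subseteq> {1..m} \<Longrightarrow> fct m J \<alpha> F \<subseteq> VV"
  using sigma_sub I_J_mem unfolding fct_def graph_def verts_iff by (auto simp: KJ_verts_def)

lemma cc_f: "cc (j, \<alpha> j) i = cfun j (\<alpha> j) i" unfolding cc_def by simp

lemma sum_supp_F:
  assumes "F \<subseteq> {1..m}" "\<forall>i. i \<notin> F \<longrightarrow> x i = 0"
  shows "(\<Sum>i=1..m. x i * Q i r) = (\<Sum>i\<in>F. x i * (Q i r :: 'r))"
  by (rule sum.mono_neutral_right) (use assms in auto)

lemma basis_c:
  assumes Gd: "Good m J q \<beta> cfun" and \<alpha>: "\<alpha> \<in> I_J m J" and F: "F \<in> K" "card F = n"
  shows "is_basis NN (fct m J \<alpha> F) Lam"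
proof -
  let ?G = "fct m J \<alpha> F"
  let ?D = "Dset m \<beta> \<alpha>"
  let ?f = "\<lambda>j. cfun j (\<alpha> j)"
  let ?Q = "q \<alpha>"
  have Fs: "F \<subseteq> {1..m}" using goodK_sub[OF gK F(1)] .
  have fF: "finite F" using Fs finite_subset by blast
  have GV: "?G \<subseteq> VV" using G_V[OF \<alpha> Fs] .
  have fG: "finite ?G" using finite_subset[OF GV finite_verts] .
  have QB: "is_basis n F ?Q" using chars \<alpha> F unfolding char_map_def by blast
  have PB: "is_basis n F PP" using chars \<beta> F unfolding char_map_def by blast
  have Qv: "\<forall>i\<in>{1..m}. ?Q i \<in> vecs n" using chars \<alpha> unfolding char_map_def by blast
  have kQ: "kerv m ?Q = Rel m PP ?D ?f" and inj: "Inj m PP ?D ?f" using Gd \<alpha> unfolding Good_def by auto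
  have Ds: "?D \<subseteq> {1..m}" using Dset_sub .
  have indep: "\<forall>v. c v = 0" if cs: "\<forall>v. v \<notin> ?G \<longrightarrow> c v = 0" and l0: "lincomb ?G c Lam = (\<lambda>r. 0)" for c
  proof -
    have s0: "sumV c = (\<lambda>r. 0)" using lincomb_sumV[OF GV cs] l0 by simp
    define z where "z = (\<lambda>i. if i \<in> {1..m} then c (i, \<beta> i) else 0)"
    have zs: "supp m z" unfolding z_def supp_def by auto
    have zc: "(\<Sum>i=1..m. g i * c (i, \<beta> i)) = (\<Sum>i=1..m. g i * z i)" for g
      by (rule sum.cong) (auto simp: z_def)
    have zc': "(\<Sum>i=1..m. c (i, \<beta> i) * g i) = (\<Sum>i=1..m. z i * g i)" for g
      by (rule sum.cong) (auto simp: z_def)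
    have zk: "z \<in> kerv m PP"
    proof -
      have "(\<Sum>i=1..m. z i * PP i r) = 0" for r
      proof (cases "r < n")
        case True then show ?thesis using Ev1[OF True, of c] s0 zc' by simp
      next
        case False
        then have "\<forall>i\<in>{1..m}. PP i r = 0" using Pv vecsD by (meson not_less)
        then show ?thesis by simp
      qed
      then show ?thesis unfolding kerv_def using zs by auto
    qed
    have e2: "c u0 + (\<Sum>i=1..m. cc u0 i * z i) = 0" if "u0 \<in> Sb" for u0
      using Ev2[OF that, of c] s0 zc by simp
    define x where "x = (\<lambda>i. if i \<in> {1..m} then (if i \<in> ?D then - (\<Sum>i'=1..m. ?f i i' * z i') else z i) else 0)"
    have "x \<in> Rel m PP ?D ?f" unfolding Rel_def
    proof (intro CollectI conjI bexI[of _ z])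
      show "supp m x" unfolding x_def supp_def by auto
      show "\<forall>i\<in>{1..m} - ?D. x i = z i" unfolding x_def by auto
      show "\<forall>j\<in>?D. x j = - (\<Sum>i=1..m. ?f j i * z i)" unfolding x_def using Ds by auto
    qed (rule zk)
    then have xk: "x \<in> kerv m ?Q" using kQ by simp
    have xF: "\<forall>i. i \<notin> F \<longrightarrow> x i = 0"
    proof (intro allI impI)
      fix i assume iF: "i \<notin> F"
      show "x i = 0"
      proof (cases "i \<in> {1..m}")
        case False then show ?thesis unfolding x_def by auto
      next
        case im: True
        show ?thesis
        proof (cases "i \<in> ?D")
          case True
          have u: "(i, \<alpha> i) \<in> Sb" using D_Sb[OF \<alpha> True] .
          have "(i, \<alpha> i) \<notin> ?G" using G_Sb[OF \<alpha> Fs u] True iF by auto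
          then have "c (i, \<alpha> i) = 0" using cs by blast
          then have "(\<Sum>i'=1..m. ?f i i' * z i') = 0" using e2[OF u] by (simp add: cc_f)
          then show ?thesis unfolding x_def using True im by simp
        next
          case False
          have "(i, \<beta> i) \<notin> ?G" using G_base[OF \<alpha> Fs im] False iF by auto
          then show ?thesis unfolding x_def z_def using False im cs by simp
        qed
      qed
    qed
    have "lincomb F x ?Q = (\<lambda>r. 0)"
    proof -
      have h: "(\<Sum>i=1..m. x i * ?Q i r) = 0" for r using xk unfolding kerv_def by (auto dest: fun_cong)
      show ?thesis unfolding lincomb_def
      proof (rule ext)
        fix r show "(\<Sum>a\<in>F. x a * ?Q a r) = 0" using h[of r] sum_supp_F[OF Fs xF, of ?Q r] by simp
      qed
    qed
    then have x0: "x i = 0" for i using basis_indep[OF QB xF] by blast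
    have "\<forall>i\<in>{1..m}-?D. z i = 0" using x0 unfolding x_def by (metis DiffE)
    moreover have "\<forall>j\<in>?D. (\<Sum>i=1..m. ?f j i * z i) = 0"
    proof
      fix j assume j: "j \<in> ?D"
      then have "x j = - (\<Sum>i=1..m. ?f j i * z i)" unfolding x_def using Ds by auto
      then show "(\<Sum>i=1..m. ?f j i * z i) = 0" using x0[of j] by simp
    qed
    ultimately have z0: "\<forall>i. z i = 0" using inj zk unfolding Inj_def by blast
    show "\<forall>v. c v = 0"
    proof
      fix v
      show "c v = 0"
      proof (cases "v \<in> VV")
        case False then show ?thesis using cs GV by blast
      next
        case True
        show ?thesis
        proof (cases "v \<in> Sb")
          case True then show ?thesis using e2[OF True] z0 by simp
        next
          case False
          then have "fst v \<in> {1..m}" "v = (fst v, \<beta> (fst v))" using not_Sb \<open>v \<in> VV\<close> by auto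
          then show ?thesis using z0 unfolding z_def by (metis)
        qed
      qed
    qed
  qed
  have span: "\<exists>c. (\<forall>v. v \<notin> ?G \<longrightarrow> c v = 0) \<and> y = lincomb ?G c Lam" if y: "y \<in> vecs NN" for y :: "nat \<Rightarrow> 'r"
  proof -
    define y0 where "y0 = (\<lambda>r. if r < n then y r else 0)"
    have y0v: "y0 \<in> vecs n" unfolding y0_def vecs_def by auto
    obtain d where ds: "\<forall>a. a \<notin> F \<longrightarrow> d a = 0" and dy: "y0 = lincomb F d PP"
      using PB y0v unfolding is_basis_def by blast
    define t where "t = (\<lambda>j. - (y (idx (j, \<alpha> j)) - (\<Sum>i=1..m. ?f j i * d i)))"
    define vv where "vv = (\<lambda>r. - (\<Sum>i\<in>?D - F. t i * ?Q i r))"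
    have vvv: "vv \<in> vecs n" unfolding vv_def using Qv Ds vecsD by (auto simp: vecs_def intro!: sum.neutral)
    obtain s where ss: "\<forall>a. a \<notin> F \<longrightarrow> s a = 0" and sv: "vv = lincomb F s ?Q"
      using QB vvv unfolding is_basis_def by blast
    define x where "x = (\<lambda>i. if i \<in> F then s i else if i \<in> ?D then t i else 0)"
    have xs: "supp m x" unfolding x_def supp_def using Fs Ds by auto
    have "(\<Sum>i=1..m. x i * ?Q i r) = 0" for r
    proof -
      have "(\<Sum>i=1..m. x i * ?Q i r) = (\<Sum>i=1..m. (if i \<in> F then s i * ?Q i r else 0) + (if i \<in> ?D - F then t i * ?Q i r else 0))"
        by (rule sum.cong) (auto simp: x_def)
      also have "\<dots> = (\<Sum>i=1..m. (if i \<in> F then s i * ?Q i r else 0)) + (\<Sum>i=1..m. (if i \<in> ?D - F then t i * ?Q i r else 0))"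
        by (rule sum.distrib)
      also have "(\<Sum>i=1..m. (if i \<in> F then s i * ?Q i r else 0)) = (\<Sum>i\<in>F. s i * ?Q i r)"
        by (rule sum_if_sub) (simp, use Fs in blast)
      also have "(\<Sum>i=1..m. (if i \<in> ?D - F then t i * ?Q i r else 0)) = (\<Sum>i\<in>?D - F. t i * ?Q i r)"
        by (rule sum_if_sub) (simp, use Ds in blast)
      finally have e: "(\<Sum>i=1..m. x i * ?Q i r) = (\<Sum>i\<in>F. s i * ?Q i r) + (\<Sum>i\<in>?D - F. t i * ?Q i r)" .
      have "(\<Sum>i\<in>F. s i * ?Q i r) = - (\<Sum>i\<in>?D - F. t i * ?Q i r)"
        using fun_cong[OF sv, of r] unfolding vv_def lincomb_def by simp
      then show ?thesis using e by simp
    qed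
    then have "x \<in> kerv m ?Q" unfolding kerv_def using xs by auto
    then have "x \<in> Rel m PP ?D ?f" using kQ by simp
    then obtain w where wk: "w \<in> kerv m PP" and wo: "\<forall>i\<in>{1..m}-?D. x i = w i"
      and wd: "\<forall>j\<in>?D. x j = - (\<Sum>i=1..m. ?f j i * w i)" unfolding Rel_def by blast
    define z where "z = (\<lambda>i. d i + w i)"
    have z0: "z i = 0" if "i \<in> {1..m}" "i \<notin> ?D" "i \<notin> F" for i
    proof -
      have "x i = w i" using wo that by blast
      moreover have "x i = 0" unfolding x_def using that by simp
      ultimately show ?thesis unfolding z_def using ds that by simp
    qed
    have zD: "(\<Sum>i=1..m. ?f j i * z i) = y (idx (j, \<alpha> j))" if "j \<in> ?D - F" for j
    proof -
      have "(\<Sum>i=1..m. ?f j i * z i) = (\<Sum>i=1..m. ?f j i * d i) + (\<Sum>i=1..m. ?f j i * w i)"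
        unfolding z_def by (simp add: distrib_left sum.distrib)
      moreover have "x j = t j" using that unfolding x_def by simp
      ultimately show ?thesis using wd that unfolding t_def by (simp add: algebra_simps)
    qed
    define c where "c = (\<lambda>v. if v \<in> Sb then (if v \<in> ?G then y (idx v) - (\<Sum>i=1..m. cc v i * z i) else 0)
                             else if v \<in> VV then z (fst v) else 0)"
    have cs: "\<forall>v. v \<notin> ?G \<longrightarrow> c v = 0"
    proof (intro allI impI)
      fix v assume vG: "v \<notin> ?G"
      show "c v = 0"
      proof (cases "v \<in> Sb")
        case True then show ?thesis using vG unfolding c_def by simp
      next
        case False
        show ?thesis
        proof (cases "v \<in> VV")
          case True
          then have v: "fst v \<in> {1..m}" "v = (fst v, \<beta> (fst v))" using not_Sb False by auto
          then have "fst v \<notin> ?D \<union> F" using G_base[OF \<alpha> Fs v(1)] vG by metis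
          then show ?thesis using z0[OF v(1)] False True unfolding c_def by simp
        qed (use False in \<open>simp add: c_def\<close>)
      qed
    qed
    have cb: "c (i, \<beta> i) = z i" if "i \<in> {1..m}" for i
      using graph_notin_sigma[of i \<beta> m J] base_in[OF that] unfolding c_def by simp
    have "y = sumV c"
    proof (rule agree[OF y sumV_vecs])
      show "\<forall>r<n. y r = sumV c r"
      proof (intro allI impI)
        fix r assume r: "r < n"
        have "sumV c r = (\<Sum>i=1..m. z i * PP i r)" unfolding Ev1[OF r] by (rule sum.cong) (auto simp: cb)
        also have "\<dots> = (\<Sum>i=1..m. d i * PP i r) + (\<Sum>i=1..m. w i * PP i r)"
          unfolding z_def by (simp add: distrib_right sum.distrib)
        also have "(\<Sum>i=1..m. w i * PP i r) = 0" using wk unfolding kerv_def by (auto dest: fun_cong)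
        also have "(\<Sum>i=1..m. d i * PP i r) = y0 r"
          unfolding dy lincomb_def using sum_supp_F[OF Fs ds] by simp
        finally show "y r = sumV c r" using r unfolding y0_def by simp
      qed
      show "\<forall>u\<in>Sb. y (idx u) = sumV c (idx u)"
      proof
        fix u assume u: "u \<in> Sb"
        have e: "sumV c (idx u) = c u + (\<Sum>i=1..m. cc u i * z i)"
          unfolding Ev2[OF u] by (simp add: cb)
        show "y (idx u) = sumV c (idx u)"
        proof (cases "u \<in> ?G")
          case True then show ?thesis using e u by (simp add: c_def)
        next
          case False
          then obtain j where j: "j \<in> ?D - F" "u = (j, \<alpha> j)" using G_Sb[OF \<alpha> Fs u] by blast
          then show ?thesis using e u False zD[OF j(1)] by (simp add: c_def cc_f)
        qed
      qed
    qed
    then show ?thesis using cs lincomb_sumV[OF GV cs] by (intro exI[of _ c]) simp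
  qed
  show ?thesis unfolding is_basis_def
  proof (intro conjI ballI)
    show "finite ?G" using fG .
    show "Lam a \<in> vecs NN" if "a \<in> ?G" for a using Lam_vecs GV that by blast
    fix y :: "nat \<Rightarrow> 'r" assume y: "y \<in> vecs NN"
    obtain c where c: "\<forall>v. v \<notin> ?G \<longrightarrow> c v = 0" "y = lincomb ?G c Lam" using span[OF y] by blast
    show "\<exists>!c. (\<forall>a. a \<notin> ?G \<longrightarrow> c a = 0) \<and> y = lincomb ?G c Lam"
    proof (rule ex1I[of _ c])
      show "(\<forall>a. a \<notin> ?G \<longrightarrow> c a = 0) \<and> y = lincomb ?G c Lam" using c by blast
      fix c' assume c': "(\<forall>a. a \<notin> ?G \<longrightarrow> c' a = 0) \<and> y = lincomb ?G c' Lam"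
      have "lincomb ?G c' Lam = lincomb ?G c Lam" using c(2) c' by simp
      then have eq: "(\<Sum>a\<in>?G. c' a * Lam a r) = (\<Sum>a\<in>?G. c a * Lam a r)" for r
        unfolding lincomb_def by (rule fun_cong)
      have "lincomb ?G (\<lambda>v. c' v - c v) Lam = (\<lambda>r. 0)"
        unfolding lincomb_def by (simp add: left_diff_distrib sum_subtractf eq)
      then have "\<forall>v. c' v - c v = 0" using indep[of "\<lambda>v. c' v - c v"] c c' by auto
      then show "c' = c" by auto
    qed
  qed
qed


lemma graph_mem: "v \<in> graph \<gamma> {1..m} \<longleftrightarrow> fst v \<in> {1..m} \<and> v = (fst v, \<gamma> (fst v))"
  unfolding graph_def by auto

lemma not_sigma_gen: "v \<in> VV \<Longrightarrow> v \<notin> sigma_face m J \<gamma> \<Longrightarrow> fst v \<in> {1..m} \<and> v = (fst v, \<gamma> (fst v))"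
  unfolding sigma_face_def KJ_verts_def by auto

lemma sum_alpha:
  assumes \<alpha>: "\<alpha> \<in> I_J m J"
  shows "(\<lambda>r. \<Sum>i=1..m. x i * Lam (i, \<alpha> i) r) = sumV (\<lambda>v. if v \<in> graph \<alpha> {1..m} then x (fst v) else 0)"
proof (rule ext)
  fix r
  have gV: "graph \<alpha> {1..m} \<subseteq> VV" using I_J_mem[OF \<alpha>] unfolding graph_def verts_iff by (auto simp: KJ_verts_def)
  have "sumV (\<lambda>v. if v \<in> graph \<alpha> {1..m} then x (fst v) else 0) r
      = (\<Sum>v\<in>VV. if v \<in> graph \<alpha> {1..m} then x (fst v) * Lam v r else 0)"
    unfolding sumV_def by (rule sum.cong) auto
  also have "\<dots> = (\<Sum>v\<in>graph \<alpha> {1..m}. x (fst v) * Lam v r)"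
    by (rule sum_if_sub[OF finite_verts gV])
  also have "\<dots> = (\<Sum>i=1..m. x i * Lam (i, \<alpha> i) r)" by (simp add: sum_graph)
  finally show "(\<Sum>i=1..m. x i * Lam (i, \<alpha> i) r) = sumV (\<lambda>v. if v \<in> graph \<alpha> {1..m} then x (fst v) else 0) r" by simp
qed

lemma rspan_sumV:
  assumes \<alpha>: "\<alpha> \<in> I_J m J"
  shows "y \<in> rspan (sigma_face m J \<alpha>) Lam \<longleftrightarrow> (\<exists>y'. (\<forall>v. v \<notin> sigma_face m J \<alpha> \<longrightarrow> y' v = 0) \<and> y = sumV y')"
proof
  assume "y \<in> rspan (sigma_face m J \<alpha>) Lam"
  then obtain c where c: "y = lincomb (sigma_face m J \<alpha>) c Lam" unfolding rspan_def by blast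
  let ?y' = "\<lambda>v. if v \<in> sigma_face m J \<alpha> then c v else 0"
  have "lincomb (sigma_face m J \<alpha>) c Lam = lincomb (sigma_face m J \<alpha>) ?y' Lam"
    unfolding lincomb_def by (rule ext, rule sum.cong) auto
  also have "\<dots> = sumV ?y'" by (rule lincomb_sumV) (use sigma_sub in auto)
  finally show "\<exists>y'. (\<forall>v. v \<notin> sigma_face m J \<alpha> \<longrightarrow> y' v = 0) \<and> y = sumV y'" using c by (intro exI[of _ ?y']) auto
next
  assume "\<exists>y'. (\<forall>v. v \<notin> sigma_face m J \<alpha> \<longrightarrow> y' v = 0) \<and> y = sumV y'"
  then obtain y' where y': "\<forall>v. v \<notin> sigma_face m J \<alpha> \<longrightarrow> y' v = 0" "y = sumV y'" by blast
  have "lincomb (sigma_face m J \<alpha>) y' Lam = sumV y'" by (rule lincomb_sumV) (use sigma_sub y' in auto)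
  then have "y = lincomb (sigma_face m J \<alpha>) y' Lam" using y' by simp
  then show "y \<in> rspan (sigma_face m J \<alpha>) Lam" unfolding rspan_def by blast
qed

lemma zero_vecs: "(\<lambda>r. 0) \<in> vecs N" unfolding vecs_def by auto

lemma kerrel_c:
  assumes \<alpha>: "\<alpha> \<in> I_J m J"
  shows "KerRel m J Lam \<alpha> = Rel m PP (Dset m \<beta> \<alpha>) (\<lambda>j. cfun j (\<alpha> j))"
proof -
  let ?D = "Dset m \<beta> \<alpha>"
  let ?f = "\<lambda>j. cfun j (\<alpha> j)"
  let ?Sa = "sigma_face m J \<alpha>"
  let ?a = "\<lambda>x v. if v \<in> graph \<alpha> {1..m} then x (fst v) else 0"
  have Ds: "?D \<subseteq> {1..m}" using Dset_sub .
  have aoff: "?a x (i, \<beta> i) = x i" if "i \<in> {1..m}" "i \<notin> ?D" for x i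
    using that unfolding Dset_def graph_mem by auto
  have aon: "?a x (i, \<beta> i) = 0" if "i \<in> ?D" for x i
    using that unfolding Dset_def graph_mem by auto
  have boff: "(i, \<beta> i) \<notin> ?Sa" if "i \<in> {1..m}" "i \<notin> ?D" for i
    using that graph_notin_sigma[of i \<alpha> m J] unfolding Dset_def by auto
  have bon: "(i, \<beta> i) \<in> ?Sa" if "i \<in> ?D" for i
    using V2[OF \<alpha> \<beta>] that unfolding graph_def by blast
  have bnSb: "(i, \<beta> i) \<notin> Sb" for i using graph_notin_sigma[of i \<beta> m J] .
  show ?thesis
  proof
    show "KerRel m J Lam \<alpha> \<subseteq> Rel m PP ?D ?f"
    proof
      fix x assume "x \<in> KerRel m J Lam \<alpha>"
      then have xs: "supp m x" and xr: "(\<lambda>r. \<Sum>i=1..m. x i * Lam (i, \<alpha> i) r) \<in> rspan ?Sa Lam"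
        unfolding KerRel_def by auto
      obtain y' where y': "\<forall>v. v \<notin> ?Sa \<longrightarrow> y' v = 0" "sumV (?a x) = sumV y'"
        using xr unfolding rspan_sumV[OF \<alpha>] sum_alpha[OF \<alpha>] by blast
      define c where "c = (\<lambda>v. ?a x v - y' v)"
      have s0: "sumV c = (\<lambda>r. 0)" unfolding c_def sumV_diff y'(2) by simp
      define z where "z = (\<lambda>i. if i \<in> {1..m} then c (i, \<beta> i) else 0)"
      have zs: "supp m z" unfolding z_def supp_def by auto
      have zc: "(\<Sum>i=1..m. g i * c (i, \<beta> i)) = (\<Sum>i=1..m. g i * z i)" for g
        by (rule sum.cong) (auto simp: z_def)
      have zc': "(\<Sum>i=1..m. c (i, \<beta> i) * g i) = (\<Sum>i=1..m. z i * g i)" for g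
        by (rule sum.cong) (auto simp: z_def)
      have zk: "z \<in> kerv m PP"
      proof -
        have "(\<Sum>i=1..m. z i * PP i r) = 0" for r
        proof (cases "r < n")
          case True then show ?thesis using Ev1[OF True, of c] s0 zc' by simp
        next
          case False
          then have "\<forall>i\<in>{1..m}. PP i r = 0" using Pv vecsD by (meson not_less)
          then show ?thesis by simp
        qed
        then show ?thesis unfolding kerv_def using zs by auto
      qed
      have xo: "\<forall>i\<in>{1..m}-?D. x i = z i"
      proof
        fix i assume i: "i \<in> {1..m}-?D"
        have "z i = ?a x (i, \<beta> i) - y' (i, \<beta> i)" using i unfolding z_def c_def by simp
        also have "?a x (i, \<beta> i) = x i" using aoff i by blast
        also have "y' (i, \<beta> i) = 0" using y'(1) boff i by blast
        finally show "x i = z i" by simp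
      qed
      have xd: "\<forall>j\<in>?D. x j = - (\<Sum>i=1..m. ?f j i * z i)"
      proof
        fix j assume j: "j \<in> ?D"
        have u: "(j, \<alpha> j) \<in> Sb" using D_Sb[OF \<alpha> j] .
        have "c (j, \<alpha> j) + (\<Sum>i=1..m. cc (j, \<alpha> j) i * z i) = 0"
          using Ev2[OF u, of c] s0 zc by simp
        moreover have "c (j, \<alpha> j) = x j"
          using y'(1) graph_notin_sigma[of j \<alpha> m J] j Ds unfolding c_def graph_mem by auto
        ultimately show "x j = - (\<Sum>i=1..m. ?f j i * z i)" by (simp add: cc_f eq_neg_iff_add_eq_0)
      qed
      show "x \<in> Rel m PP ?D ?f" unfolding Rel_def using xs zk xo xd by blast
    qed
    show "Rel m PP ?D ?f \<subseteq> KerRel m J Lam \<alpha>"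
    proof
      fix x assume "x \<in> Rel m PP ?D ?f"
      then obtain z where xs: "supp m x" and zk: "z \<in> kerv m PP" and xo: "\<forall>i\<in>{1..m}-?D. x i = z i"
        and xd: "\<forall>j\<in>?D. x j = - (\<Sum>i=1..m. ?f j i * z i)" unfolding Rel_def by blast
      define y' where "y' = (\<lambda>v. if v \<in> ?Sa then (if v \<in> Sb then (\<Sum>i=1..m. cc v i * z i) else - z (fst v)) else 0)"
      have y's: "\<forall>v. v \<notin> ?Sa \<longrightarrow> y' v = 0" unfolding y'_def by simp
      define c where "c = (\<lambda>v. ?a x v - y' v)"
      have cb: "c (i, \<beta> i) = z i" if "i \<in> {1..m}" for i
      proof (cases "i \<in> ?D")
        case True
        have h1: "?a x (i, \<beta> i) = 0" using aon[OF True] .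
        have h2: "y' (i, \<beta> i) = - z i" unfolding y'_def using bon[OF True] bnSb[of i] by simp
        show ?thesis unfolding c_def using h1 h2 by simp
      next
        case False
        have h1: "?a x (i, \<beta> i) = x i" using aoff[OF that False] .
        have h2: "y' (i, \<beta> i) = 0" unfolding y'_def using boff[OF that False] by simp
        have h3: "x i = z i" using xo that False by blast
        show ?thesis unfolding c_def using h1 h2 h3 by simp
      qed
      have "sumV c = (\<lambda>r. 0)"
      proof (rule agree[OF sumV_vecs zero_vecs])
        show "\<forall>r<n. sumV c r = 0"
        proof (intro allI impI)
          fix r assume r: "r < n"
          have "sumV c r = (\<Sum>i=1..m. z i * PP i r)" unfolding Ev1[OF r] by (rule sum.cong) (auto simp: cb)
          also have "\<dots> = 0" using zk unfolding kerv_def by (auto dest: fun_cong)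
          finally show "sumV c r = 0" .
        qed
        show "\<forall>u\<in>Sb. sumV c (idx u) = 0"
        proof
          fix u assume u: "u \<in> Sb"
          have e: "sumV c (idx u) = c u + (\<Sum>i=1..m. cc u i * z i)"
            unfolding Ev2[OF u] by (simp add: cb)
          show "sumV c (idx u) = 0"
          proof (cases "u \<in> ?Sa")
            case True
            have "u \<notin> graph \<alpha> {1..m}"
            proof
              assume "u \<in> graph \<alpha> {1..m}"
              then have "u = (fst u, \<alpha> (fst u))" unfolding graph_mem by blast
              then show False using True graph_notin_sigma[of "fst u" \<alpha> m J] by simp
            qed
            then show ?thesis using e True u unfolding c_def y'_def by simp
          next
            case False
            have uV: "u \<in> VV" using u sigma_sub by blast
            then have uj: "fst u \<in> {1..m}" "u = (fst u, \<alpha> (fst u))" using not_sigma_gen False by auto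
            have "(fst u, \<alpha> (fst u)) \<in> Sb" using u uj by simp
            then have "\<alpha> (fst u) \<noteq> \<beta> (fst u)" using sigma_face_iff[OF \<beta>] by blast
            then have jD: "fst u \<in> ?D" using uj unfolding Dset_def by auto
            have "?a x u = x (fst u)" using uj unfolding graph_mem by auto
            have y'u: "y' u = 0" unfolding y'_def using False by simp
            have su: "snd u = \<alpha> (fst u)" using uj by (metis snd_conv)
            have ccu: "cc u i = cfun (fst u) (\<alpha> (fst u)) i" for i unfolding cc_def su ..
            have "x (fst u) = - (\<Sum>i=1..m. cc u i * z i)" using xd jD unfolding ccu by blast
            then have "c u = - (\<Sum>i=1..m. cc u i * z i)"
              unfolding c_def using y'u \<open>?a x u = x (fst u)\<close> by simp
            then show ?thesis using e by simp
          qed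
        qed
      qed
      then have h0: "(\<lambda>r. sumV (?a x) r - sumV y' r) = (\<lambda>r. 0)" unfolding c_def sumV_diff .
      have "sumV (?a x) r = sumV y' r" for r using fun_cong[OF h0, of r] by simp
      then have "sumV (?a x) = sumV y'" by (rule ext)
      then have "(\<lambda>r. \<Sum>i=1..m. x i * Lam (i, \<alpha> i) r) \<in> rspan ?Sa Lam"
        unfolding rspan_sumV[OF \<alpha>] sum_alpha[OF \<alpha>] using y's by blast
      then show "x \<in> KerRel m J Lam \<alpha>" unfolding KerRel_def using xs by blast
    qed
  qed
qed

end


lemma construction:
  fixes q :: "(nat \<Rightarrow> nat) \<Rightarrow> nat \<Rightarrow> nat \<Rightarrow> 'r::comm_ring_1" and cfun :: "nat \<Rightarrow> nat \<Rightarrow> nat \<Rightarrow> 'r"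
  assumes gK: "goodK K m n" and J1: "\<forall>i\<in>{1..m}. 1 \<le> J i" and \<beta>: "\<beta> \<in> I_J m J"
    and chars: "\<forall>\<alpha>\<in>I_J m J. char_map K {1..m} n (q \<alpha>)"
    and Gd: "Good m J q \<beta> cfun"
  shows "realizable K m n J q"
proof -
  have c: "card (sigma_face m J \<beta>) = card {n..<dimJ m n J}" using card_sigma[OF \<beta> J1] by simp
  obtain idx where idx: "bij_betw idx (sigma_face m J \<beta>) {n..<dimJ m n J}"
    using bij_betw_iff_card[OF finite_sigma finite_atLeastLessThan] c by blast
  interpret C: constr K m n J \<beta> idx q cfun
    by (unfold_locales) (use gK J1 \<beta> chars idx in auto)
  have cm: "char_map (KJ K m J) (KJ_verts m J) (dimJ m n J) C.Lam"
    unfolding char_map_def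
  proof (intro conjI ballI impI)
    show "C.Lam v \<in> vecs (dimJ m n J)" if "v \<in> KJ_verts m J" for v using C.Lam_vecs that .
    fix G assume G: "G \<in> KJ K m J" "card G = dimJ m n J"
    obtain \<alpha> F where \<alpha>: "\<alpha> \<in> I_J m J" and F: "F \<in> K" "card F = n" and GF: "G = fct m J \<alpha> F"
      using classify_facet[OF gK J1 G] by blast
    show "is_basis (dimJ m n J) G C.Lam" unfolding GF by (rule C.basis_c[OF Gd \<alpha> F])
  qed
  have "\<forall>\<alpha>\<in>I_J m J. proj_rep m n J C.Lam \<alpha> (q \<alpha>)"
  proof
    fix \<alpha> assume \<alpha>: "\<alpha> \<in> I_J m J"
    have "kerv m (q \<alpha>) = KerRel m J C.Lam \<alpha>" using Gd \<alpha> C.kerrel_c[OF \<alpha>] unfolding Good_def by simp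
    then show "proj_rep m n J C.Lam \<alpha> (q \<alpha>)" using ker_proj[OF gK J1 cm \<alpha>] chars \<alpha> by blast
  qed
  then show ?thesis unfolding realizable_def using cm by blast
qed




lemma ord_emb_1: "ord_emb {1} 1 = 1"
  unfolding ord_emb_def by simp

lemma ord_emb_2: "1 < (k::nat) \<Longrightarrow> ord_emb {1, k} 1 = 1 \<and> ord_emb {1, k} 2 = k"
proof -
  assume k: "1 < k"
  have "sorted_list_of_set {1, k} = [1, k]"
    using k by (simp add: sorted_list_of_set_insert)
  then show ?thesis unfolding ord_emb_def by simp
qed

lemma ord_emb_in: "finite S \<Longrightarrow> k \<in> {1..card S} \<Longrightarrow> ord_emb S k \<in> S"
proof -
  assume a: "finite S" "k \<in> {1..card S}"
  have "k - 1 < length (sorted_list_of_set S)" using a by auto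
  then have "sorted_list_of_set S ! (k - 1) \<in> set (sorted_list_of_set S)" by (rule nth_mem)
  then show ?thesis unfolding ord_emb_def using a by simp
qed

lemma ord_emb_inj: "finite S \<Longrightarrow> k \<in> {1..card S} \<Longrightarrow> k' \<in> {1..card S} \<Longrightarrow> ord_emb S k = ord_emb S k' \<Longrightarrow> k = k'"
proof -
  assume a: "finite S" "k \<in> {1..card S}" "k' \<in> {1..card S}" "ord_emb S k = ord_emb S k'"
  have d: "distinct (sorted_list_of_set S)" by simp
  have l: "length (sorted_list_of_set S) = card S" by simp
  have "k - 1 = k' - 1"
    using nth_eq_iff_index_eq[OF d, of "k - 1" "k' - 1"] a l unfolding ord_emb_def by auto
  then show "k = k'" using a by auto
qed


lemma I_J_iff: "\<alpha> \<in> I_J m J \<longleftrightarrow> (\<forall>i\<in>{1..m}. \<alpha> i \<in> {1..J i}) \<and> (\<forall>i. i \<notin> {1..m} \<longrightarrow> \<alpha> i = undefined)"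
  unfolding I_J_def PiE_iff extensional_def by auto

lemma Rel_cong:
  assumes "\<forall>j\<in>D. \<forall>z\<in>kerv m P. (\<Sum>i=1..m. f j i * z i) = (\<Sum>i=1..m. f' j i * z i)"
  shows "Rel m P D f = Rel m P D f'" and "Inj m P D f = Inj m P D f'"
proof -
  show "Rel m P D f = Rel m P D f'"
  proof (rule set_eqI)
    fix x
    have "(\<exists>z\<in>kerv m P. (\<forall>i\<in>{1..m}-D. x i = z i) \<and> (\<forall>j\<in>D. x j = - (\<Sum>i=1..m. f j i * z i)))
        \<longleftrightarrow> (\<exists>z\<in>kerv m P. (\<forall>i\<in>{1..m}-D. x i = z i) \<and> (\<forall>j\<in>D. x j = - (\<Sum>i=1..m. f' j i * z i)))"
    proof (rule bex_cong[OF refl])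
      fix z assume "z \<in> kerv m P"
      then show "((\<forall>i\<in>{1..m}-D. x i = z i) \<and> (\<forall>j\<in>D. x j = - (\<Sum>i=1..m. f j i * z i)))
          \<longleftrightarrow> ((\<forall>i\<in>{1..m}-D. x i = z i) \<and> (\<forall>j\<in>D. x j = - (\<Sum>i=1..m. f' j i * z i)))"
        using assms by simp
    qed
    then show "x \<in> Rel m P D f \<longleftrightarrow> x \<in> Rel m P D f'" unfolding Rel_def by simp
  qed
  show "Inj m P D f = Inj m P D f'"
    unfolding Inj_def
  proof (rule ball_cong[OF refl])
    fix z assume "z \<in> kerv m P"
    then show "((\<forall>i\<in>{1..m}-D. z i = 0) \<and> (\<forall>j\<in>D. (\<Sum>i=1..m. f j i * z i) = 0) \<longrightarrow> (\<forall>i. z i = 0))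
      \<longleftrightarrow> ((\<forall>i\<in>{1..m}-D. z i = 0) \<and> (\<forall>j\<in>D. (\<Sum>i=1..m. f' j i * z i) = 0) \<longrightarrow> (\<forall>i. z i = 0))"
      using assms by simp
  qed
qed

lemma uniq:
  fixes P :: "nat \<Rightarrow> nat \<Rightarrow> 'r::comm_ring_1"
  assumes gK: "goodK K m n" and Pc: "char_map K {1..m} n P" and j: "j \<in> {1..m}"
    and eq: "Rel m P {j} f = Rel m P {j} f'" and z: "z \<in> kerv m P"
  shows "(\<Sum>i=1..m. f j i * z i) = (\<Sum>i=1..m. f' j i * z i)"
proof -
  obtain F where F: "F \<in> K" "{j} \<subseteq> F" "card F = n" using goodK_facet[OF gK goodK_single[OF gK j]] by blast
  have PB: "is_basis n F P" using Pc F unfolding char_map_def by blast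
  have fF: "finite F" using basis_fin[OF PB] .
  have tf: "a = 0" if a: "(\<lambda>r. a * P j r) = (\<lambda>r. 0)" for a
  proof -
    have "lincomb F (\<lambda>i. if i = j then a else 0) P = (\<lambda>r. a * P j r)"
      unfolding lincomb_def using F(2) fF by (simp add: if_distrib[of "\<lambda>x. x * _"] cong: if_cong)
    then show ?thesis using basis_indep[OF PB, of "\<lambda>i. if i = j then a else 0" j] a F(2) by auto
  qed
  have zs: "supp m z" using z unfolding kerv_def by blast
  define x where "x = (\<lambda>i. if i = j then - (\<Sum>i=1..m. f j i * z i) else z i)"
  have "x \<in> Rel m P {j} f" unfolding Rel_def
  proof (intro CollectI conjI bexI[of _ z])
    show "supp m x" using zs j unfolding x_def supp_def by auto
    show "\<forall>i\<in>{1..m} - {j}. x i = z i" unfolding x_def by auto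
    show "\<forall>j'\<in>{j}. x j' = - (\<Sum>i=1..m. f j' i * z i)" unfolding x_def by auto
  qed (rule z)
  then have "x \<in> Rel m P {j} f'" using eq by simp
  then obtain z' where z'k: "z' \<in> kerv m P" and xo: "\<forall>i\<in>{1..m}-{j}. x i = z' i"
    and xj: "x j = - (\<Sum>i=1..m. f' j i * z' i)" unfolding Rel_def by blast
  have z's: "supp m z'" using z'k unfolding kerv_def by blast
  have zz: "z i = z' i" if "i \<in> {1..m}" "i \<noteq> j" for i using xo that unfolding x_def by auto
  have "(\<lambda>r. (z j - z' j) * P j r) = (\<lambda>r. 0)"
  proof (rule ext)
    fix r
    have "(\<Sum>i=1..m. (z i - z' i) * P i r) = (\<Sum>i=1..m. z i * P i r) - (\<Sum>i=1..m. z' i * P i r)"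
      by (simp add: left_diff_distrib sum_subtractf)
    also have "\<dots> = 0"
    proof -
      have a1: "(\<lambda>r. \<Sum>i=1..m. z i * P i r) = (\<lambda>r. 0)" using z unfolding kerv_def by blast
      have a2: "(\<lambda>r. \<Sum>i=1..m. z' i * P i r) = (\<lambda>r. 0)" using z'k unfolding kerv_def by blast
      show ?thesis using fun_cong[OF a1, of r] fun_cong[OF a2, of r] by simp
    qed
    finally have s0: "(\<Sum>i=1..m. (z i - z' i) * P i r) = 0" .
    have "(\<Sum>i=1..m. (z i - z' i) * P i r) = (z j - z' j) * P j r + (\<Sum>i\<in>{1..m}-{j}. (z i - z' i) * P i r)"
      using j by (simp add: sum.remove)
    also have "(\<Sum>i\<in>{1..m}-{j}. (z i - z' i) * P i r) = 0" using zz by (auto intro!: sum.neutral)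
    finally show "(z j - z' j) * P j r = 0" using s0 by simp
  qed
  then have "z j - z' j = 0" by (rule tf)
  then have zz': "z i = z' i" if "i \<in> {1..m}" for i using zz that by (cases "i = j") auto
  have "(\<Sum>i=1..m. f' j i * z' i) = (\<Sum>i=1..m. f' j i * z i)" by (rule sum.cong) (auto simp: zz')
  then show ?thesis using xj unfolding x_def by simp
qed


lemma realizable_rel:
  fixes p :: "(nat \<Rightarrow> nat) \<Rightarrow> nat \<Rightarrow> nat \<Rightarrow> 'r::comm_ring_1"
  assumes R: "realizable K m n J p"
  shows "\<exists>\<Lambda>. char_map (KJ K m J) (KJ_verts m J) (dimJ m n J) \<Lambda> \<and> (\<forall>\<alpha>\<in>I_J m J. kerv m (p \<alpha>) = KerRel m J \<Lambda> \<alpha>)"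
proof -
  obtain \<Lambda> where cm: "char_map (KJ K m J) (KJ_verts m J) (dimJ m n J) \<Lambda>"
    and pr: "\<forall>\<alpha>\<in>I_J m J. proj_rep m n J \<Lambda> \<alpha> (p \<alpha>)" using R unfolding realizable_def by blast
  have \<Lambda>v: "\<forall>v\<in>KJ_verts m J. \<Lambda> v \<in> vecs (dimJ m n J)" using cm unfolding char_map_def by blast
  show ?thesis using cm pr proj_ker[OF \<Lambda>v] by blast
qed

lemma easy_dir:
  fixes p :: "(nat \<Rightarrow> nat) \<Rightarrow> nat \<Rightarrow> nat \<Rightarrow> 'r::comm_ring_1"
  assumes gK: "goodK K m n" and J1: "\<forall>i\<in>{1..m}. 1 \<le> J i"
    and pc: "\<forall>\<alpha>\<in>I_J m J. char_map K {1..m} n (p \<alpha>)" and R: "realizable K m n J p"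
    and S: "\<forall>i\<in>{1..m}. S i \<noteq> {} \<and> S i \<subseteq> {1..J i} \<and> card (S i) \<le> 2"
  shows "realizable K m n (\<lambda>i. card (S i)) (subpuzzle m S p)"
proof -
  let ?J' = "\<lambda>i. card (S i)"
  let ?q = "subpuzzle m S p"
  define emb where "emb = (\<lambda>\<gamma>. restrict (\<lambda>i. ord_emb (S i) (\<gamma> i)) {1..m})"
  have fin: "finite (S i)" if "i \<in> {1..m}" for i using S that finite_subset by blast
  have J'1: "\<forall>i\<in>{1..m}. 1 \<le> ?J' i" using S fin by (simp add: Suc_le_eq card_gt_0_iff)
  have embI: "emb \<gamma> \<in> I_J m J" if "\<gamma> \<in> I_J m ?J'" for \<gamma>
  proof -
    have "ord_emb (S i) (\<gamma> i) \<in> {1..J i}" if i: "i \<in> {1..m}" for i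
      using ord_emb_in[OF fin[OF i] I_J_mem[OF \<open>\<gamma> \<in> I_J m ?J'\<close> i]] S i by blast
    then show ?thesis unfolding I_J_iff emb_def by auto
  qed
  have emb_at: "emb \<gamma> i = ord_emb (S i) (\<gamma> i)" if "i \<in> {1..m}" for \<gamma> i
    unfolding emb_def using that by simp
  have qe: "?q \<gamma> = p (emb \<gamma>)" for \<gamma> unfolding subpuzzle_def emb_def ..
  define ones where "ones = restrict (\<lambda>_. 1::nat) {1..m}"
  have onesI: "ones \<in> I_J m ?J'" unfolding I_J_iff ones_def using J'1 by auto
  define \<beta> where "\<beta> = emb ones"
  have \<beta>I: "\<beta> \<in> I_J m J" unfolding \<beta>_def using embI[OF onesI] .
  obtain \<Lambda> where cm: "char_map (KJ K m J) (KJ_verts m J) (dimJ m n J) \<Lambda>"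
    and rel: "\<forall>\<alpha>\<in>I_J m J. kerv m (p \<alpha>) = KerRel m J \<Lambda> \<alpha>" using realizable_rel[OF R] by blast
  obtain cfun where Gd: "Good m J p \<beta> cfun" using extraction[OF gK J1 cm \<beta>I rel] by blast
  define cfun' where "cfun' = (\<lambda>j k. cfun j (ord_emb (S j) k))"
  have Gd': "Good m ?J' ?q ones cfun'"
    unfolding Good_def
  proof (intro ballI)
    fix \<gamma> assume \<gamma>: "\<gamma> \<in> I_J m ?J'"
    let ?\<alpha> = "emb \<gamma>"
    have \<alpha>I: "?\<alpha> \<in> I_J m J" using embI[OF \<gamma>] .
    have Deq: "Dset m ones \<gamma> = Dset m \<beta> ?\<alpha>"
    proof -
      have "\<gamma> i \<noteq> ones i \<longleftrightarrow> ?\<alpha> i \<noteq> \<beta> i" if i: "i \<in> {1..m}" for i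
      proof -
        have g: "\<gamma> i \<in> {1..card (S i)}" using I_J_mem[OF \<gamma> i] .
        have o: "ones i = 1" "(1::nat) \<in> {1..card (S i)}" using i J'1 unfolding ones_def by auto
        have "?\<alpha> i = ord_emb (S i) (\<gamma> i)" "\<beta> i = ord_emb (S i) 1"
          using emb_at[OF i] o(1) unfolding \<beta>_def by auto
        then show ?thesis using ord_emb_inj[OF fin[OF i] g o(2)] o(1) by auto
      qed
      then show ?thesis unfolding Dset_def by auto
    qed
    have feq: "\<forall>j\<in>Dset m \<beta> ?\<alpha>. \<forall>z\<in>kerv m (p \<beta>). (\<Sum>i=1..m. cfun j (?\<alpha> j) i * z i) = (\<Sum>i=1..m. cfun' j (\<gamma> j) i * z i)"
      using Dset_sub emb_at unfolding cfun'_def by fastforce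
    have G1: "kerv m (p ?\<alpha>) = Rel m (p \<beta>) (Dset m \<beta> ?\<alpha>) (\<lambda>j. cfun j (?\<alpha> j))"
      and G2: "Inj m (p \<beta>) (Dset m \<beta> ?\<alpha>) (\<lambda>j. cfun j (?\<alpha> j))"
      using Gd \<alpha>I unfolding Good_def by auto
    have qb: "?q ones = p \<beta>" unfolding qe \<beta>_def ..
    show "kerv m (?q \<gamma>) = Rel m (?q ones) (Dset m ones \<gamma>) (\<lambda>j. cfun' j (\<gamma> j)) \<and>
          Inj m (?q ones) (Dset m ones \<gamma>) (\<lambda>j. cfun' j (\<gamma> j))"
      unfolding qe[of \<gamma>] qb Deq using G1 G2 Rel_cong[OF feq] by simp
  qed
  have pc': "\<forall>\<gamma>\<in>I_J m ?J'. char_map K {1..m} n (?q \<gamma>)" using pc embI qe by simp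
  show ?thesis by (rule construction[OF gK J'1 onesI pc' Gd'])
qed


lemma hard_dir:
  fixes p :: "(nat \<Rightarrow> nat) \<Rightarrow> nat \<Rightarrow> nat \<Rightarrow> 'r::comm_ring_1"
  assumes gK: "goodK K m n" and J1: "\<forall>i\<in>{1..m}. 1 \<le> J i"
    and pc: "\<forall>\<alpha>\<in>I_J m J. char_map K {1..m} n (p \<alpha>)"
    and H: "\<forall>S. (\<forall>i\<in>{1..m}. S i \<noteq> {} \<and> S i \<subseteq> {1..J i} \<and> card (S i) \<le> 2) \<longrightarrow>
              realizable K m n (\<lambda>i. card (S i)) (subpuzzle m S p)"
  shows "realizable K m n J p"
proof -
  define ones where "ones = restrict (\<lambda>_. 1::nat) {1..m}"
  define SS where "SS = (\<lambda>(\<alpha>::nat \<Rightarrow> nat) (i::nat). if \<alpha> i = 1 then {1::nat} else {1, \<alpha> i})"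
  define JJ where "JJ = (\<lambda>\<alpha> i. card (SS \<alpha> i))"
  define qq where "qq = (\<lambda>\<alpha>. subpuzzle m (SS \<alpha>) p)"
  define emb where "emb = (\<lambda>\<alpha> \<gamma>. restrict (\<lambda>i. ord_emb (SS \<alpha> i) (\<gamma> i)) {1..m})"
  have onesJ: "ones \<in> I_J m J" unfolding I_J_iff ones_def using J1 by auto
  have qe: "qq \<alpha> \<gamma> = p (emb \<alpha> \<gamma>)" for \<alpha> \<gamma> unfolding qq_def subpuzzle_def emb_def ..
  have gt1: "1 < \<alpha> i" if "\<alpha> \<in> I_J m J" "i \<in> {1..m}" "\<alpha> i \<noteq> 1" for \<alpha> i
    using I_J_mem[OF that(1,2)] that(3) by auto
  have JJ_at: "JJ \<alpha> i = (if \<alpha> i = 1 then 1 else 2)" if "\<alpha> \<in> I_J m J" "i \<in> {1..m}" for \<alpha> i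
    using gt1[OF that] unfolding JJ_def SS_def by auto
  have JJ1: "\<forall>i\<in>{1..m}. 1 \<le> JJ \<alpha> i" if "\<alpha> \<in> I_J m J" for \<alpha> using JJ_at[OF that] by simp
  have onesJJ: "ones \<in> I_J m (JJ \<alpha>)" if "\<alpha> \<in> I_J m J" for \<alpha>
    unfolding I_J_iff ones_def using JJ1[OF that] by auto
  have emb1: "ord_emb (SS \<alpha> i) 1 = 1" if "\<alpha> \<in> I_J m J" "i \<in> {1..m}" for \<alpha> i
    using ord_emb_1 ord_emb_2[OF gt1[OF that]] unfolding SS_def by auto
  have emb2: "ord_emb (SS \<alpha> i) 2 = \<alpha> i" if "\<alpha> \<in> I_J m J" "i \<in> {1..m}" "\<alpha> i \<noteq> 1" for \<alpha> i
    using ord_emb_2[OF gt1[OF that]] that(3) unfolding SS_def by auto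
  have emb_ones: "emb \<alpha> ones = ones" if "\<alpha> \<in> I_J m J" for \<alpha>
    unfolding emb_def ones_def using emb1[OF that] by (auto intro!: ext)
  have Sc: "\<forall>i\<in>{1..m}. SS \<alpha> i \<noteq> {} \<and> SS \<alpha> i \<subseteq> {1..J i} \<and> card (SS \<alpha> i) \<le> 2" if "\<alpha> \<in> I_J m J" for \<alpha>
    using I_J_mem[OF that] J1 unfolding SS_def by (auto simp: card_insert_if)
  have ex: "\<exists>cf. Good m (JJ \<alpha>) (qq \<alpha>) ones cf" if \<alpha>: "\<alpha> \<in> I_J m J" for \<alpha>
  proof -
    have "realizable K m n (JJ \<alpha>) (qq \<alpha>)" using H Sc[OF \<alpha>] unfolding JJ_def qq_def by blast
    then obtain \<Lambda> where cm: "char_map (KJ K m (JJ \<alpha>)) (KJ_verts m (JJ \<alpha>)) (dimJ m n (JJ \<alpha>)) \<Lambda>"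
      and rel: "\<forall>\<gamma>\<in>I_J m (JJ \<alpha>). kerv m (qq \<alpha> \<gamma>) = KerRel m (JJ \<alpha>) \<Lambda> \<gamma>" using realizable_rel by blast
    show ?thesis using extraction[OF gK JJ1[OF \<alpha>] cm onesJJ[OF \<alpha>] rel] .
  qed
  define CF where "CF = (\<lambda>\<alpha>. SOME cf. Good m (JJ \<alpha>) (qq \<alpha>) ones cf)"
  have CFg: "Good m (JJ \<alpha>) (qq \<alpha>) ones (CF \<alpha>)" if "\<alpha> \<in> I_J m J" for \<alpha>
    unfolding CF_def using someI_ex[OF ex[OF that]] .
  define cfun where "cfun = (\<lambda>j k. CF (ones(j := k)) j 2)"
  define gam where "gam = (\<lambda>\<alpha>::nat \<Rightarrow> nat. restrict (\<lambda>i. if \<alpha> i = 1 then 1 else 2::nat) {1..m})"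
  have gamI: "gam \<alpha> \<in> I_J m (JJ \<alpha>)" if "\<alpha> \<in> I_J m J" for \<alpha>
    unfolding I_J_iff gam_def using JJ_at[OF that] by auto
  have emb_gam: "emb \<alpha> (gam \<alpha>) = \<alpha>" if \<alpha>: "\<alpha> \<in> I_J m J" for \<alpha>
  proof (rule ext)
    fix i show "emb \<alpha> (gam \<alpha>) i = \<alpha> i"
    proof (cases "i \<in> {1..m}")
      case True then show ?thesis unfolding emb_def gam_def using emb1[OF \<alpha> True] emb2[OF \<alpha> True] by auto
    next
      case False then show ?thesis unfolding emb_def using I_J_out[OF \<alpha> False] False by auto
    qed
  qed
  have Dgam: "Dset m ones (gam \<alpha>) = Dset m ones \<alpha>" if "\<alpha> \<in> I_J m J" for \<alpha>
    unfolding Dset_def gam_def ones_def by auto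
  have updI: "ones(j := k) \<in> I_J m J" if "j \<in> {1..m}" "k \<in> {1..J j}" for j k
    using onesJ that unfolding I_J_iff by auto
  have Good_p: "Good m J p ones cfun"
    unfolding Good_def
  proof (intro ballI)
    fix \<alpha> assume \<alpha>: "\<alpha> \<in> I_J m J"
    let ?D = "Dset m ones \<alpha>"
    have Ds: "?D \<subseteq> {1..m}" using Dset_sub .
    have qo: "qq \<alpha> ones = p ones" using qe emb_ones[OF \<alpha>] by simp
    have G\<alpha>: "kerv m (p \<alpha>) = Rel m (p ones) ?D (\<lambda>j. CF \<alpha> j (gam \<alpha> j)) \<and> Inj m (p ones) ?D (\<lambda>j. CF \<alpha> j (gam \<alpha> j))"
      using CFg[OF \<alpha>, unfolded Good_def qe emb_ones[OF \<alpha>], rule_format, OF gamI[OF \<alpha>]]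
      unfolding emb_gam[OF \<alpha>] Dgam[OF \<alpha>] .
    have feq: "\<forall>j\<in>?D. \<forall>z\<in>kerv m (p ones). (\<Sum>i=1..m. CF \<alpha> j (gam \<alpha> j) i * z i) = (\<Sum>i=1..m. cfun j (\<alpha> j) i * z i)"
    proof (intro ballI)
      fix j z assume j: "j \<in> ?D" and z: "z \<in> kerv m (p ones)"
      have jm: "j \<in> {1..m}" and aj: "\<alpha> j \<noteq> 1" using j unfolding Dset_def ones_def by auto
      let ?\<alpha>j = "ones(j := \<alpha> j)"
      have \<alpha>jI: "?\<alpha>j \<in> I_J m J" using updI[OF jm I_J_mem[OF \<alpha> jm]] .
      let ?g = "ones(j := 2::nat)"
      have gI: "?g \<in> I_J m (JJ \<alpha>)" using onesJJ[OF \<alpha>] JJ_at[OF \<alpha> jm] aj jm unfolding I_J_iff by auto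
      have gI': "?g \<in> I_J m (JJ ?\<alpha>j)" using onesJJ[OF \<alpha>jI] JJ_at[OF \<alpha>jI jm] aj jm unfolding I_J_iff by auto
      have e1: "emb \<alpha> ?g = ?\<alpha>j"
      proof (rule ext)
        fix i show "emb \<alpha> ?g i = ?\<alpha>j i"
        proof (cases "i \<in> {1..m}")
          case True then show ?thesis unfolding emb_def ones_def using emb1[OF \<alpha> True] emb2[OF \<alpha> True] aj by auto
        next
          case False then show ?thesis unfolding emb_def ones_def using jm by auto
        qed
      qed
      have "?\<alpha>j j \<noteq> 1" using aj by simp
      have e2: "emb ?\<alpha>j ?g = ?\<alpha>j"
      proof (rule ext)
        fix i show "emb ?\<alpha>j ?g i = ?\<alpha>j i"
        proof (cases "i \<in> {1..m}")
          case True
          show ?thesis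
          proof (cases "i = j")
            case True then show ?thesis unfolding emb_def using emb2[OF \<alpha>jI jm] aj jm by auto
          next
            case False then show ?thesis unfolding emb_def ones_def using emb1[OF \<alpha>jI \<open>i \<in> {1..m}\<close>] \<open>i \<in> {1..m}\<close> by (auto simp: ones_def)
          qed
        next
          case False then show ?thesis unfolding emb_def ones_def using jm by auto
        qed
      qed
      have Dg: "Dset m ones ?g = {j}" unfolding Dset_def ones_def using jm by auto
      have qo': "qq ?\<alpha>j ones = p ones" using qe emb_ones[OF \<alpha>jI] by simp
      have r1: "kerv m (p ?\<alpha>j) = Rel m (p ones) {j} (\<lambda>j'. CF \<alpha> j' (?g j'))"
        using CFg[OF \<alpha>, unfolded Good_def qe emb_ones[OF \<alpha>], rule_format, OF gI, THEN conjunct1]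
        unfolding e1 Dg .
      have r2: "kerv m (p ?\<alpha>j) = Rel m (p ones) {j} (\<lambda>j'. CF ?\<alpha>j j' (?g j'))"
        using CFg[OF \<alpha>jI, unfolded Good_def qe emb_ones[OF \<alpha>jI], rule_format, OF gI', THEN conjunct1]
        unfolding e2 Dg .
      have "(\<Sum>i=1..m. CF \<alpha> j (?g j) i * z i) = (\<Sum>i=1..m. CF ?\<alpha>j j (?g j) i * z i)"
        using uniq[OF gK pc[rule_format, OF onesJ] jm _ z, of "\<lambda>j'. CF \<alpha> j' (?g j')" "\<lambda>j'. CF ?\<alpha>j j' (?g j')"] r1 r2
        by simp
      moreover have "gam \<alpha> j = 2" unfolding gam_def using jm aj by simp
      ultimately show "(\<Sum>i=1..m. CF \<alpha> j (gam \<alpha> j) i * z i) = (\<Sum>i=1..m. cfun j (\<alpha> j) i * z i)"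
        unfolding cfun_def by simp
    qed
    show "kerv m (p \<alpha>) = Rel m (p ones) ?D (\<lambda>j. cfun j (\<alpha> j)) \<and> Inj m (p ones) ?D (\<lambda>j. cfun j (\<alpha> j))"
      using G\<alpha> Rel_cong[OF feq] by simp
  qed
  show ?thesis by (rule construction[OF gK J1 onesJ pc Good_p])
qed

lemma main_generic:
  fixes p :: "(nat \<Rightarrow> nat) \<Rightarrow> nat \<Rightarrow> nat \<Rightarrow> 'r::comm_ring_1"
  assumes "star_shaped_sphere m n K" "\<forall>i\<in>{1..m}. 1 \<le> J i" "puzzle K m n J p"
  shows "realizable K m n J p \<longleftrightarrow>
     (\<forall>S. (\<forall>i\<in>{1..m}. S i \<noteq> {} \<and> S i \<subseteq> {1..J i} \<and> card (S i) \<le> 2) \<longrightarrow>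
          realizable K m n (\<lambda>i. card (S i)) (subpuzzle m S p))"
proof -
  have gK: "goodK K m n" using star_goodK[OF assms(1)] .
  have pc: "\<forall>\<alpha>\<in>I_J m J. char_map K {1..m} n (p \<alpha>)" using assms(3) unfolding puzzle_def by blast
  show ?thesis using easy_dir[OF gK assms(2) pc] hard_dir[OF gK assms(2) pc] by blast
qed


theorem mainTheorem8:
  shows "(\<forall>(K::nat set set) m n J (p :: (nat \<Rightarrow> nat) \<Rightarrow> nat \<Rightarrow> nat \<Rightarrow> int).
            star_shaped_sphere m n K \<longrightarrow> (\<forall>i\<in>{1..m}. 1 \<le> J i) \<longrightarrow> puzzle K m n J p \<longrightarrow>
            (realizable K m n J p \<longleftrightarrow>
              (\<forall>S. (\<forall>i\<in>{1..m}. S i \<noteq> {} \<and> S i \<subseteq> {1..J i} \<and> card (S i) \<le> 2) \<longrightarrow>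
                   realizable K m n (\<lambda>i. card (S i)) (subpuzzle m S p))))
       \<and> (\<forall>(K::nat set set) m n J (p :: (nat \<Rightarrow> nat) \<Rightarrow> nat \<Rightarrow> nat \<Rightarrow> bit).
            star_shaped_sphere m n K \<longrightarrow> (\<forall>i\<in>{1..m}. 1 \<le> J i) \<longrightarrow> puzzle K m n J p \<longrightarrow>
            (realizable K m n J p \<longleftrightarrow>
              (\<forall>S. (\<forall>i\<in>{1..m}. S i \<noteq> {} \<and> S i \<subseteq> {1..J i} \<and> card (S i) \<le> 2) \<longrightarrow>
                   realizable K m n (\<lambda>i. card (S i)) (subpuzzle m S p))))"
  apply (intro conjI allI impI)
   apply (rule main_generic; assumption)
  apply (rule main_generic; assumption)
  done

end
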